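(* Let $n\geq 2$ and let $G$ be the $(2n+1)$-dimensional Heisenberg group $G=\langle x_1,\dots,x_{2n+1}\mid [x_i,x_{n+i}]=x_{2n+1}\ (1\le i\le n),\ \text{all other pairs } x_j,x_k\text{ commute}\rangle$ with Mal'cev basis $(x_1,\dots,x_{2n+1})$. Then for every ordering of a basis of the module $M$ for which the Nickel representation is upper unitriangular, the image of $G$ in $UT_{2n+2}(\mathbb{Z})$ is a distorted subgroup.
   Context: Every $g\in G$ is uniquely $x_1^{a_1}\cdots x_{2n+1}^{a_{2n+1}}$, $a_i\in\mathbb{Z}$. Let $t_i:G\to\mathbb{Z}$ map $x_1^{a_1}\cdots x_{2n+1}^{a_{2n+1}}\mapsto a_i$, viewed in the dual $(\mathbb{Q}G)^*$; $G$ acts on $(\mathbb{Q}G)^*$ by $f^g(h)=f(hg^{-1})$. The $G$-submodule $M$ generated by $t_1,\dots,t_{2n+1}$ is finite-dimensional and faithful (here with $\mathbb{Q}$-basis $\{t_1,\dots,t_{2n+1},1\}$); ordering a basis so that all matrices are upper unitriangular gives the Nickel embedding $G\to UT_{2n+2}(\mathbb{Z})$, the group of upper unitriangular integer matrices. A subgroup $H$ of a finitely generated group $K$ is distorted if $\Delta_H^K(n)=\max\{dist_H(1,h): h\in H, dist_K(1,h)\le n\}$ (word metrics) is not bounded by $Cn$ for any constant $C$. *)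

theory Defs
  imports "Jordan_Normal_Form.Matrix" "HOL-Algebra.Generated_Groups"
begin

definition word_length :: "('a, 'b) monoid_scheme \<Rightarrow> 'a set \<Rightarrow> 'a \<Rightarrow> nat" where
  "word_length G S g =
     (LEAST k. \<exists>ws. length ws = k \<and> set ws \<subseteq> S \<union> (\<lambda>s. inv\<^bsub>G\<^esub> s) ` S
                  \<and> foldr (\<otimes>\<^bsub>G\<^esub>) ws \<one>\<^bsub>G\<^esub> = g)"

definition distortion_fn ::
  "('a, 'b) monoid_scheme \<Rightarrow> 'a set \<Rightarrow> 'a set \<Rightarrow> 'a set \<Rightarrow> nat \<Rightarrow> nat" where
  "distortion_fn K H S T m =
     Max {word_length (K\<lparr>carrier := H\<rparr>) S h | h. h \<in> H \<and> word_length K T h \<le> m}"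

definition distorted_subgroup :: "('a, 'b) monoid_scheme \<Rightarrow> 'a set \<Rightarrow> bool" where
  "distorted_subgroup K H \<longleftrightarrow>
     group K \<and> subgroup H K \<and>
     (\<exists>T. finite T \<and> T \<subseteq> carrier K \<and> generate K T = carrier K) \<and>
     (\<exists>S. finite S \<and> S \<subseteq> H \<and> generate K S = H) \<and>
     (\<forall>S T. finite S \<and> S \<subseteq> H \<and> generate K S = H \<and>
            finite T \<and> T \<subseteq> carrier K \<and> generate K T = carrier K \<longrightarrow>
            \<not> (\<exists>C::real. \<forall>m. real (distortion_fn K H S T m) \<le> C * real m))"

definition UT :: "nat \<Rightarrow> int mat set" where
  "UT N = {A \<in> carrier_mat N N. \<forall>i<N. A $$ (i,i) = 1 \<and> (\<forall>j<i. A $$ (i,j) = 0)}"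

definition UT_group :: "nat \<Rightarrow> int mat monoid" where
  "UT_group N = \<lparr>carrier = UT N, mult = (*), one = 1\<^sub>m N\<rparr>"

text \<open>An element x_1^{a_1} ... x_{2n+1}^{a_{2n+1}} is represented by its coordinate
  function a (a i for 1 \<le> i \<le> 2n+1, zero elsewhere). The product is obtained by the
  collection process from the relations [x_i, x_{n+i}] = x_{2n+1} with
  [x,y] = x^{-1} y^{-1} x y, x_{2n+1} central, all other generators commuting.\<close>
definition heis_carrier :: "nat \<Rightarrow> (nat \<Rightarrow> int) set" where
  "heis_carrier n = {a. \<forall>i. (i = 0 \<or> i > 2*n+1) \<longrightarrow> a i = 0}"

definition heis_mult :: "nat \<Rightarrow> (nat \<Rightarrow> int) \<Rightarrow> (nat \<Rightarrow> int) \<Rightarrow> (nat \<Rightarrow> int)" where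
  "heis_mult n a b = (\<lambda>i.
     if 1 \<le> i \<and> i \<le> 2*n then a i + b i
     else if i = 2*n+1 then a i + b i - (\<Sum>k=1..n. a (n+k) * b k)
     else 0)"

definition heis :: "nat \<Rightarrow> (nat \<Rightarrow> int) monoid" where
  "heis n = \<lparr>carrier = heis_carrier n, mult = heis_mult n, one = (\<lambda>_. 0)\<rparr>"

text \<open>Basis of M, indexed by 0..2n+1: index j \<le> 2n is t_{j+1}, index 2n+1 is the
  constant function 1. Functions G \<rightarrow> Q.\<close>
definition nickel_basis :: "nat \<Rightarrow> nat \<Rightarrow> (nat \<Rightarrow> int) \<Rightarrow> rat" where
  "nickel_basis n j = (if j \<le> 2*n then (\<lambda>h. of_int (h (j+1))) else (\<lambda>h. 1))"

definition dual_act :: "nat \<Rightarrow> (nat \<Rightarrow> int) \<Rightarrow> ((nat \<Rightarrow> int) \<Rightarrow> rat) \<Rightarrow> ((nat \<Rightarrow> int) \<Rightarrow> rat)" where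
  "dual_act n g f = (\<lambda>h. f (heis_mult n h (inv\<^bsub>heis n\<^esub> g)))"

text \<open>Matrix of g w.r.t. the ordered basis (position p holds basis element sigma p):
  row p contains the coefficients of (basis (sigma p))^g; since the action is a right
  action, g \<mapsto> matrix is then a homomorphism.\<close>
definition nickel_rep :: "nat \<Rightarrow> (nat \<Rightarrow> nat) \<Rightarrow> (nat \<Rightarrow> int) \<Rightarrow> int mat" where
  "nickel_rep n \<sigma> g = (THE A. A \<in> carrier_mat (2*n+2) (2*n+2) \<and>
      (\<forall>p < 2*n+2. \<forall>h \<in> heis_carrier n.
         dual_act n g (nickel_basis n (\<sigma> p)) h
           = (\<Sum>q < 2*n+2. of_int (A $$ (p,q)) * nickel_basis n (\<sigma> q) h)))"

end

theory Submission
  imports Defs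
begin

lemma mult_entry:
  assumes "A \<in> carrier_mat N N" "B \<in> carrier_mat N N" "r < N" "s < N"
  shows "(A*B)$$(r,s) = (\<Sum>t<N. A$$(r,t) * B$$(t,s))"
  using assms by (simp add: scalar_prod_def atLeast0LessThan)

lemma sum3_delta:
  fixes R :: "nat \<Rightarrow> 'a::comm_ring_1"
  assumes "a < N" "b < N" "c < N"
  shows "(\<Sum>t<N. ((if t=a then x else 0) + (if t=b then y else 0) + (if t=c then z else 0)) * R t)
         = x * R a + y * R b + z * R c"
proof -
  have e: "\<And>P (u::'a) v. (if P then u else 0) * v = (if P then u * v else 0)" by simp
  show ?thesis using assms by (simp only: distrib_right sum.distrib e sum.delta finite_lessThan) simp
qed

definition el :: "nat \<Rightarrow> nat \<Rightarrow> nat \<Rightarrow> int \<Rightarrow> int mat" where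
  "el N i j c = mat N N (\<lambda>(r,s). (if r = s then 1 else 0) + (if r = i \<and> s = j then c else 0))"

lemma el_carrier[simp]: "el N i j c \<in> carrier_mat N N"
  by (simp add: el_def)

lemma el_index[simp]: "r < N \<Longrightarrow> s < N \<Longrightarrow> el N i j c $$ (r,s) = (if r = s then 1 else 0) + (if r = i \<and> s = j then c else 0)"
  by (simp add: el_def)

lemma el_left_mult:
  assumes "A \<in> carrier_mat N N" "i < N" "j < N" "r < N" "s < N"
  shows "(el N i j c * A) $$ (r,s) = A$$(r,s) + (if r = i then c * A$$(j,s) else 0)"
proof -
  have "(el N i j c * A) $$ (r,s) = (\<Sum>t<N. ((if t=r then 1 else 0) + (if t=j then (if r = i then c else 0) else 0) + (if t=j then 0 else 0)) * A$$(t,s))"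
    using assms by (subst mult_entry) (auto intro!: sum.cong)
  also have "\<dots> = A$$(r,s) + (if r = i then c * A$$(j,s) else 0)"
    using assms by (subst sum3_delta) auto
  finally show ?thesis .
qed

definition hm :: "nat \<Rightarrow> nat \<Rightarrow> nat \<Rightarrow> nat \<Rightarrow> int \<Rightarrow> int \<Rightarrow> int \<Rightarrow> int mat" where
  "hm N i j k a b c = mat N N (\<lambda>(r,s). (if r = s then 1 else 0) + (if r = i \<and> s = j then a else 0)
      + (if r = j \<and> s = k then b else 0) + (if r = i \<and> s = k then c else 0))"

lemma hm_carrier[simp]: "hm N i j k a b c \<in> carrier_mat N N"
  by (simp add: hm_def)

lemma hm_mult:
  assumes "i < j" "j < k" "k < N"
  shows "hm N i j k a b c * hm N i j k a' b' c' = hm N i j k (a+a') (b+b') (c+c'+a*b')"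
proof (rule eq_matI)
  fix r s assume rs: "r < dim_row (hm N i j k (a+a') (b+b') (c+c'+a*b'))" "s < dim_col (hm N i j k (a+a') (b+b') (c+c'+a*b'))"
  hence rs: "r < N" "s < N" by (auto simp: hm_def)
  let ?R = "\<lambda>t. hm N i j k a' b' c' $$ (t,s)"
  have "(hm N i j k a b c * hm N i j k a' b' c') $$ (r,s) = (\<Sum>t<N. ((if t=r then 1 else 0) + (if t=j then (if r = i then a else 0) else 0) + (if t=k then (if r = j then b else 0) + (if r = i then c else 0) else 0)) * ?R t)"
    using assms rs by (subst mult_entry) (auto simp: hm_def intro!: sum.cong)
  also have "\<dots> = ?R r + (if r = i then a else 0) * ?R j + ((if r = j then b else 0) + (if r = i then c else 0)) * ?R k"
    using assms rs by (subst sum3_delta) auto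
  also have "\<dots> = hm N i j k (a+a') (b+b') (c+c'+a*b') $$ (r,s)"
    using assms rs by (auto simp: hm_def algebra_simps)
  finally show "(hm N i j k a b c * hm N i j k a' b' c') $$ (r,s) = hm N i j k (a+a') (b+b') (c+c'+a*b') $$ (r,s)" .
qed (auto simp: hm_def)

lemma hm_el1: "hm N i j k a 0 0 = el N i j a" by (rule eq_matI) (auto simp: hm_def el_def)
lemma hm_el2: "hm N i j k 0 b 0 = el N j k b" by (rule eq_matI) (auto simp: hm_def el_def)
lemma hm_el3: "hm N i j k 0 0 c = el N i k c" by (rule eq_matI) (auto simp: hm_def el_def)
lemma hm_one: "hm N i j k 0 0 0 = 1\<^sub>m N" by (rule eq_matI) (auto simp: hm_def)


lemma UT_carrier: "A \<in> UT N \<Longrightarrow> A \<in> carrier_mat N N" by (simp add: UT_def)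

lemma UT_entry: "A \<in> UT N \<Longrightarrow> i < N \<Longrightarrow> j < N \<Longrightarrow> A $$ (i,j) = (if i = j then 1 else if j < i then 0 else A $$ (i,j))"
  by (auto simp: UT_def)

lemma UT_diag: "A \<in> UT N \<Longrightarrow> i < N \<Longrightarrow> A $$ (i,i) = 1" by (auto simp: UT_def)

lemma UT_low: "A \<in> UT N \<Longrightarrow> i < N \<Longrightarrow> j < i \<Longrightarrow> A $$ (i,j) = 0" by (auto simp: UT_def)

lemma one_UT: "1\<^sub>m N \<in> UT N" by (auto simp: UT_def)

lemma el_UT: "i < j \<Longrightarrow> j < N \<Longrightarrow> el N i j c \<in> UT N" by (auto simp: UT_def)

lemma UT_mult:
  assumes A: "A \<in> UT N" and B: "B \<in> UT N"
  shows "A * B \<in> UT N"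
proof -
  have cA: "A \<in> carrier_mat N N" and cB: "B \<in> carrier_mat N N" using A B by (auto simp: UT_def)
  have "(A*B) $$ (i,j) = (if i = j then 1 else 0)" if "i < N" "j \<le> i" for i j
  proof -
    have "(A*B) $$ (i,j) = (\<Sum>t<N. A$$(i,t) * B$$(t,j))" using that by (intro mult_entry[OF cA cB]) auto
    also have "\<dots> = (\<Sum>t<N. if t = i then (if i = j then 1 else 0) else 0)"
    proof (rule sum.cong)
      fix t assume t: "t \<in> {..<N}"
      show "A$$(i,t) * B$$(t,j) = (if t = i then (if i = j then 1 else 0) else 0)"
      proof (cases "t < i")
        case True thus ?thesis using UT_low[OF A] that t by auto
      next
        case False
        show ?thesis
        proof (cases "t = i")
          case True thus ?thesis using UT_diag[OF A] UT_diag[OF B] UT_low[OF B] that by auto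
        next
          case False
          hence "j < t" using \<open>\<not> t < i\<close> that by auto
          thus ?thesis using UT_low[OF B] t False by auto
        qed
      qed
    qed simp
    also have "\<dots> = (if i = j then 1 else 0)" using that by simp
    finally show ?thesis .
  qed
  thus ?thesis using cA cB by (auto simp: UT_def)
qed

definition clean :: "nat \<Rightarrow> nat \<Rightarrow> nat \<Rightarrow> int mat \<Rightarrow> bool" where
  "clean N j m A \<longleftrightarrow> (\<forall>r s. r < s \<and> s < N \<and> (s < j \<or> (s = j \<and> r < m)) \<longrightarrow> A $$ (r,s) = 0)"

lemma clean_full: "A \<in> UT N \<Longrightarrow> clean N j m A \<Longrightarrow> N \<le> j \<Longrightarrow> A = 1\<^sub>m N"
  apply (rule eq_matI)
  apply (auto simp: clean_def UT_def)
  by (metis linorder_neqE_nat order_less_le_trans)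

lemma clean_step:
  assumes A: "A \<in> UT N" and mj: "m < j" "j < N" and c: "clean N j m A"
  shows "clean N j (Suc m) (el N m j (- A$$(m,j)) * A)"
  unfolding clean_def
proof (intro allI impI)
  fix r s assume rs: "r < s \<and> s < N \<and> (s < j \<or> s = j \<and> r < Suc m)"
  have cA: "A \<in> carrier_mat N N" using A by (simp add: UT_def)
  have e: "(el N m j (- A$$(m,j)) * A) $$ (r,s) = A$$(r,s) + (if r = m then - A$$(m,j) * A$$(j,s) else 0)"
    using rs mj by (intro el_left_mult[OF cA]) auto
  show "(el N m j (- A$$(m,j)) * A) $$ (r,s) = 0"
  proof (cases "r = m")
    case True
    show ?thesis
    proof (cases "s < j")
      case True thus ?thesis using e c rs UT_low[OF A, of j s] mj \<open>r = m\<close> unfolding clean_def by auto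
    next
      case False thus ?thesis using e rs UT_diag[OF A, of j] mj \<open>r = m\<close> by auto
    qed
  next
    case False thus ?thesis using e c rs unfolding clean_def by auto
  qed
qed

lemma UT_induct_aux:
  assumes one: "P (1\<^sub>m N)"
    and step: "\<And>A i j c. A \<in> UT N \<Longrightarrow> i < j \<Longrightarrow> j < N \<Longrightarrow> P (el N i j c * A) \<Longrightarrow> P A"
  shows "A \<in> UT N \<Longrightarrow> clean N j m A \<Longrightarrow> P A"
proof (induction "(N - j)*(N+1) + (N - m)" arbitrary: j m A rule: less_induct)
  case less
  show ?case
  proof (cases "N \<le> j")
    case True thus ?thesis using clean_full[OF less.prems] one by simp
  next
    case False
    show ?thesis
    proof (cases "m < j")
      case True
      let ?A = "el N m j (- A$$(m,j)) * A"
      have "P ?A"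
        apply (rule less.hyps[of j "Suc m"])
        using True False apply simp
        using UT_mult[OF el_UT less.prems(1)] True False apply simp
        using clean_step[OF less.prems(1) True _ less.prems(2)] False by simp
      thus ?thesis using step[OF less.prems(1), of m j] True False by simp
    next
      case nm: False
      have lt: "(N - Suc j)*(N+1) + (N - 0) < (N - j)*(N+1) + (N - m)"
      proof -
        have "N - j = Suc (N - Suc j)" using False by simp
        thus ?thesis by simp
      qed
      have "clean N (Suc j) 0 A" unfolding clean_def
      proof (intro allI impI)
        fix r s assume "r < s \<and> s < N \<and> (s < Suc j \<or> s = Suc j \<and> r < 0)"
        hence "r < s \<and> s < N \<and> (s < j \<or> s = j \<and> r < m)" using nm by auto
        thus "A $$ (r,s) = 0" using less.prems(2) unfolding clean_def by blast
      qed
      thus ?thesis using less.hyps[OF lt less.prems(1)] by simp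
    qed
  qed
qed

lemma UT_induct[consumes 1, case_names one step]:
  assumes "A \<in> UT N" "P (1\<^sub>m N)"
    "\<And>A i j c. A \<in> UT N \<Longrightarrow> i < j \<Longrightarrow> j < N \<Longrightarrow> P (el N i j c * A) \<Longrightarrow> P A"
  shows "P A"
  using UT_induct_aux[of P N A 0 0] assms by (simp add: clean_def)

lemma UT_lone: "x \<in> UT N \<Longrightarrow> 1\<^sub>m N * x = x"
  using UT_carrier left_mult_one_mat by blast

lemma UT_group_group: "group (UT_group N)"
proof (rule groupI)
  fix x assume x: "x \<in> carrier (UT_group N)"
  have "\<exists>y \<in> UT N. y * x = 1\<^sub>m N" using x[unfolded UT_group_def, simplified]
  proof (induction rule: UT_induct)
    case one thus ?case using one_UT[of N] by (intro bexI[of _ "1\<^sub>m N"]) auto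
  next
    case (step A i j c)
    then obtain y where y: "y \<in> UT N" "y * (el N i j c * A) = 1\<^sub>m N" by auto
    have "(y * el N i j c) * A = 1\<^sub>m N"
      using y UT_carrier[OF step(1)] UT_carrier[OF y(1)] by (subst assoc_mult_mat[of _ N N _ N _ N]) auto
    thus ?case using UT_mult[OF y(1) el_UT[OF step(2,3)]] by blast
  qed
  thus "\<exists>y\<in>carrier (UT_group N). y \<otimes>\<^bsub>UT_group N\<^esub> x = \<one>\<^bsub>UT_group N\<^esub>" by (simp add: UT_group_def)
qed (auto simp: UT_group_def UT_mult one_UT UT_carrier UT_lone intro!: assoc_mult_mat[of _ N N _ N _ N])

lemma UT_group_simps[simp]: "carrier (UT_group N) = UT N" "mult (UT_group N) = (*)" "one (UT_group N) = 1\<^sub>m N"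
  by (auto simp: UT_group_def)

lemma el_dims[simp]: "dim_row (el N i j c) = N" "dim_col (el N i j c) = N" by (auto simp: el_def)

lemma el_add: "i \<noteq> j \<Longrightarrow> i < N \<Longrightarrow> j < N \<Longrightarrow> el N i j a * el N i j b = el N i j (a + b)"
  by (rule eq_matI) (auto simp del: index_mult_mat(1) simp: el_left_mult[OF el_carrier])

lemma el_inv:
  assumes ij: "i < j" "j < N"
  shows "inv\<^bsub>UT_group N\<^esub> (el N i j a) = el N i j (-a)"
proof -
  interpret group "UT_group N" by (rule UT_group_group)
  have "el N i j (-a) * el N i j a = 1\<^sub>m N"
    using ij el_add[of i j N "-a" a] by (auto simp: el_def intro!: eq_matI)
  thus ?thesis using ij el_UT by (intro inv_equality) auto
qed

definition Tgen :: "nat \<Rightarrow> int mat set" where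
  "Tgen N = (\<lambda>(i,j). el N i j 1) ` {(i,j). i < j \<and> j < N}"

lemma Tgen_finite: "finite (Tgen N)"
proof -
  have "{(i,j). i < j \<and> j < N} \<subseteq> {..<N} \<times> {..<N}" by auto
  thus ?thesis unfolding Tgen_def by (meson finite_SigmaI finite_imageI finite_lessThan finite_subset)
qed

lemma Tgen_sub: "Tgen N \<subseteq> UT N" by (auto simp: Tgen_def el_UT)

lemma el_gen:
  assumes ij: "i < j" "j < N"
  shows "el N i j c \<in> generate (UT_group N) (Tgen N)"
proof -
  interpret group "UT_group N" by (rule UT_group_group)
  have g1: "el N i j 1 \<in> generate (UT_group N) (Tgen N)" using ij by (intro generate.incl) (auto simp: Tgen_def)
  have t1: "el N i j 1 \<in> Tgen N" using ij by (auto simp: Tgen_def)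
  have g2: "el N i j (-1) \<in> generate (UT_group N) (Tgen N)"
    using generate.inv[OF t1, of "UT_group N"] el_inv[OF ij, of 1] by simp
  have kk: "el N i j (int k) \<in> generate (UT_group N) (Tgen N) \<and> el N i j (- int k) \<in> generate (UT_group N) (Tgen N)" for k
  proof (induction k)
    case 0
    have "el N i j 0 = 1\<^sub>m N" by (rule eq_matI) (auto simp: el_def)
    thus ?case using generate.one[of "UT_group N" "Tgen N"] by simp
  next
    case (Suc k)
    have "el N i j (int k) * el N i j 1 \<in> generate (UT_group N) (Tgen N)"
      using generate.eng[of "el N i j (int k)" "UT_group N" "Tgen N" "el N i j 1"] Suc g1 by simp
    moreover have "el N i j (- int k) * el N i j (-1) \<in> generate (UT_group N) (Tgen N)"
      using generate.eng[of "el N i j (- int k)" "UT_group N" "Tgen N" "el N i j (-1)"] Suc g2 by simp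
    ultimately show ?case using el_add[of i j N] ij by (simp add: add.commute)
  qed
  show ?thesis
  proof (cases "c \<ge> 0")
    case True thus ?thesis using kk[of "nat c"] by simp
  next
    case False thus ?thesis using kk[of "nat (-c)"] by simp
  qed
qed

lemma UT_generated: "generate (UT_group N) (Tgen N) = UT N"
proof -
  interpret group "UT_group N" by (rule UT_group_group)
  have s1: "generate (UT_group N) (Tgen N) \<subseteq> UT N" using generate_incl[of "Tgen N"] Tgen_sub by auto
  have s2: "A \<in> generate (UT_group N) (Tgen N)" if A: "A \<in> UT N" for A
    using A
  proof (induction rule: UT_induct)
    case one thus ?case using generate.one[of "UT_group N" "Tgen N"] by simp
  next
    case (step A i j c)
    let ?e = "el N i j c"
    have eU: "?e \<in> carrier (UT_group N)" using el_UT[OF step(2,3)] by simp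
    have AU: "A \<in> carrier (UT_group N)" using step(1) by simp
    have g: "inv\<^bsub>UT_group N\<^esub> ?e \<otimes>\<^bsub>UT_group N\<^esub> (?e \<otimes>\<^bsub>UT_group N\<^esub> A) \<in> generate (UT_group N) (Tgen N)"
    proof -
      have "el N i j (-c) * (el N i j c * A) \<in> generate (UT_group N) (Tgen N)"
        using generate.eng[OF el_gen[OF step(2,3), of "-c"] step(4)] by simp
      thus ?thesis by (simp add: el_inv[OF step(2,3)])
    qed
    have "inv\<^bsub>UT_group N\<^esub> ?e \<otimes>\<^bsub>UT_group N\<^esub> (?e \<otimes>\<^bsub>UT_group N\<^esub> A) = (inv\<^bsub>UT_group N\<^esub> ?e \<otimes>\<^bsub>UT_group N\<^esub> ?e) \<otimes>\<^bsub>UT_group N\<^esub> A"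
      using m_assoc[symmetric, OF inv_closed[OF eU] eU AU] .
    also have "\<dots> = A" using eU AU by (simp only: l_inv l_one)
    finally show ?case using g by simp
  qed
  show ?thesis using s1 s2 by blast
qed

definition hinv :: "nat \<Rightarrow> (nat \<Rightarrow> int) \<Rightarrow> (nat \<Rightarrow> int)" where
  "hinv n g = (\<lambda>i. if 1 \<le> i \<and> i \<le> 2*n then - g i
       else if i = 2*n+1 then - g i - (\<Sum>k=1..n. g (n+k) * g k) else 0)"

lemma hm_lo: "k \<in> {1..n} \<Longrightarrow> heis_mult n a b k = a k + b k"
  by (auto simp: heis_mult_def)
lemma hm_hi: "k \<in> {1..n} \<Longrightarrow> heis_mult n a b (n+k) = a (n+k) + b (n+k)"
  by (auto simp: heis_mult_def)
lemma hm_top: "heis_mult n a b (2*n+1) = a (2*n+1) + b (2*n+1) - (\<Sum>k=1..n. a (n+k) * b k)"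
  by (auto simp: heis_mult_def)

lemma hm_top': "heis_mult n a b (Suc (2*n)) = a (Suc (2*n)) + b (Suc (2*n)) - (\<Sum>k=1..n. a (n+k) * b k)"
  by (auto simp: heis_mult_def)

lemma heis_simps[simp]: "carrier (heis n) = heis_carrier n" "mult (heis n) = heis_mult n" "one (heis n) = (\<lambda>_. 0)"
  by (auto simp: heis_def)

lemma heis_assoc: "heis_mult n (heis_mult n x y) z = heis_mult n x (heis_mult n y z)"
proof
  fix i
  show "heis_mult n (heis_mult n x y) z i = heis_mult n x (heis_mult n y z) i"
  proof (cases "i = 2*n+1")
    case True
    have s1: "(\<Sum>k=1..n. heis_mult n x y (n+k) * z k) = (\<Sum>k=1..n. (x (n+k) + y (n+k)) * z k)"
      by (rule sum.cong) (auto simp: heis_mult_def)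
    have s2: "(\<Sum>k=1..n. x (n+k) * heis_mult n y z k) = (\<Sum>k=1..n. x (n+k) * (y k + z k))"
      by (rule sum.cong) (auto simp: heis_mult_def)
    have "heis_mult n (heis_mult n x y) z (2*n+1) = x (2*n+1) + y (2*n+1) - (\<Sum>k=1..n. x (n+k) * y k) + z (2*n+1) - (\<Sum>k=1..n. (x (n+k) + y (n+k)) * z k)"
      by (simp only: hm_top s1)
    also have "\<dots> = x (2*n+1) + (y (2*n+1) + z (2*n+1) - (\<Sum>k=1..n. y (n+k) * z k)) - (\<Sum>k=1..n. x (n+k) * (y k + z k))"
      by (simp add: algebra_simps sum.distrib)
    also have "\<dots> = heis_mult n x (heis_mult n y z) (2*n+1)"
      by (simp only: hm_top s2)
    finally show ?thesis using True by simp
  qed (auto simp: heis_mult_def)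
qed

lemma hinv_left: "heis_mult n (hinv n x) x = (\<lambda>_. 0)"
proof
  fix i
  show "heis_mult n (hinv n x) x i = 0"
  proof (cases "i = 2*n+1")
    case True
    have s: "(\<Sum>k=1..n. hinv n x (n+k) * x k) = (\<Sum>k=1..n. - x (n+k) * x k)"
      by (rule sum.cong) (auto simp: hinv_def)
    have t: "hinv n x (2*n+1) = - x (2*n+1) - (\<Sum>k=1..n. x (n+k) * x k)" by (simp add: hinv_def)
    have "heis_mult n (hinv n x) x (2*n+1) = - x (2*n+1) - (\<Sum>k=1..n. x (n+k) * x k) + x (2*n+1) - (\<Sum>k=1..n. - x (n+k) * x k)"
      by (simp only: hm_top s t)
    also have "\<dots> = 0" by (simp add: sum_negf)
    finally show ?thesis using True by simp
  qed (auto simp: heis_mult_def hinv_def)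
qed

lemma heis_closed: "heis_mult n x y \<in> heis_carrier n"
  by (auto simp: heis_carrier_def heis_mult_def)

lemma heis_lone: "x \<in> heis_carrier n \<Longrightarrow> heis_mult n (\<lambda>_. 0) x = x"
proof
  fix i assume x: "x \<in> heis_carrier n"
  show "heis_mult n (\<lambda>_. 0) x i = x i"
  proof (cases "i = 0 \<or> i > 2*n+1")
    case True thus ?thesis using x by (auto simp: heis_carrier_def heis_mult_def)
  next
    case False thus ?thesis by (auto simp: heis_mult_def)
  qed
qed

lemma heis_zero: "(\<lambda>_. 0) \<in> heis_carrier n" by (simp add: heis_carrier_def)

lemma heis_group: "group (heis n)"
proof (rule groupI)
  fix x assume x: "x \<in> carrier (heis n)"
  have "heis_mult n (hinv n x) x = (\<lambda>_. 0)" by (rule hinv_left)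
  moreover have "hinv n x \<in> heis_carrier n" by (auto simp: heis_carrier_def hinv_def)
  ultimately show "\<exists>y\<in>carrier (heis n). y \<otimes>\<^bsub>heis n\<^esub> x = \<one>\<^bsub>heis n\<^esub>" by auto
qed (auto simp: heis_assoc heis_lone heis_closed heis_zero)

lemma heis_inv: "g \<in> heis_carrier n \<Longrightarrow> inv\<^bsub>heis n\<^esub> g = hinv n g"
proof -
  interpret group "heis n" by (rule heis_group)
  assume g: "g \<in> heis_carrier n"
  have "heis_mult n (hinv n g) g = (\<lambda>_. 0)" by (rule hinv_left)
  moreover have "hinv n g \<in> heis_carrier n" by (auto simp: heis_carrier_def hinv_def)
  ultimately show ?thesis using g by (intro inv_equality) auto
qed

definition ce :: "nat \<Rightarrow> int \<Rightarrow> nat \<Rightarrow> int" where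
  "ce i c = (\<lambda>j. if j = i then c else 0)"

lemma ce_carrier: "1 \<le> i \<Longrightarrow> i \<le> 2*n+1 \<Longrightarrow> ce i c \<in> heis_carrier n"
  by (auto simp: ce_def heis_carrier_def)

lemma ce_add: "1 \<le> i \<Longrightarrow> i \<le> 2*n+1 \<Longrightarrow> heis_mult n (ce i a) (ce i b) = ce i (a+b)"
  by (rule ext) (auto simp: heis_mult_def ce_def intro!: sum.neutral)

definition Egen :: "nat \<Rightarrow> (nat \<Rightarrow> int) set" where
  "Egen n = (\<lambda>i. ce i 1) ` {1..2*n+1}"

lemma ce_gen:
  assumes i: "1 \<le> i" "i \<le> 2*n+1"
  shows "ce i c \<in> generate (heis n) (Egen n)"
proof -
  interpret group "heis n" by (rule heis_group)
  have g1: "ce i 1 \<in> generate (heis n) (Egen n)" using i by (intro generate.incl) (auto simp: Egen_def)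
  have "inv\<^bsub>heis n\<^esub> (ce i 1) = ce i (-1)"
    using i ce_add[OF i, of "-1" 1] ce_carrier[OF i] by (intro inv_equality) (auto simp: ce_def)
  hence g2: "ce i (-1) \<in> generate (heis n) (Egen n)"
    using generate.inv[of "ce i 1" "Egen n" "heis n"] i by (auto simp: Egen_def)
  have kk: "ce i (int k) \<in> generate (heis n) (Egen n) \<and> ce i (- int k) \<in> generate (heis n) (Egen n)" for k
  proof (induction k)
    case 0
    have "ce i 0 = (\<lambda>_. 0)" by (auto simp: ce_def)
    thus ?case using generate.one[of "heis n" "Egen n"] by simp
  next
    case (Suc k)
    have "heis_mult n (ce i (int k)) (ce i 1) \<in> generate (heis n) (Egen n)"
      using generate.eng[of "ce i (int k)" "heis n" "Egen n" "ce i 1"] Suc g1 by simp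
    moreover have "heis_mult n (ce i (- int k)) (ce i (-1)) \<in> generate (heis n) (Egen n)"
      using generate.eng[of "ce i (- int k)" "heis n" "Egen n" "ce i (-1)"] Suc g2 by simp
    ultimately show ?case using ce_add[OF i] by (simp add: add.commute)
  qed
  show ?thesis
  proof (cases "c \<ge> 0")
    case True thus ?thesis using kk[of "nat c"] by simp
  next
    case False thus ?thesis using kk[of "nat (-c)"] by simp
  qed
qed

lemma heis_gen_aux:
  "g \<in> heis_carrier n \<Longrightarrow> (\<forall>i. m < i \<and> i \<le> 2*n \<longrightarrow> g i = 0) \<Longrightarrow> g \<in> generate (heis n) (Egen n)"
proof (induction m arbitrary: g)
  case 0
  have "g = ce (2*n+1) (g (2*n+1))"
  proof
    fix i
    show "g i = ce (2*n+1) (g (2*n+1)) i"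
    proof (cases "i = 0 \<or> i > 2*n+1")
      case True thus ?thesis using 0(1) by (auto simp: ce_def heis_carrier_def)
    next
      case False thus ?thesis using 0(2)[rule_format, of i] by (auto simp: ce_def)
    qed
  qed
  moreover have "ce (2*n+1) (g (2*n+1)) \<in> generate (heis n) (Egen n)" by (rule ce_gen) auto
  ultimately show ?case by metis
next
  case (Suc m)
  show ?case
  proof (cases "Suc m \<le> 2*n")
    case False thus ?thesis using Suc by auto
  next
    case True
    interpret group "heis n" by (rule heis_group)
    let ?c = "ce (Suc m) (- g (Suc m))"
    let ?g = "heis_mult n ?c g"
    have cc: "?c \<in> heis_carrier n" using True by (intro ce_carrier) auto
    have gc: "?g \<in> heis_carrier n" using m_closed[of ?c g] cc Suc.prems by simp
    have "?g i = 0" if "m < i" "i \<le> 2*n" for i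
      using that Suc.prems(2) by (auto simp: heis_mult_def ce_def)
    hence "?g \<in> generate (heis n) (Egen n)" using Suc.IH[OF gc] by auto
    moreover have "ce (Suc m) (g (Suc m)) \<in> generate (heis n) (Egen n)" using True by (intro ce_gen) auto
    ultimately have "heis_mult n (ce (Suc m) (g (Suc m))) ?g \<in> generate (heis n) (Egen n)"
      using generate.eng[of _ "heis n" "Egen n"] by fastforce
    moreover have "heis_mult n (ce (Suc m) (g (Suc m))) ?g = g"
    proof -
      have "heis_mult n (ce (Suc m) (g (Suc m))) ?g = heis_mult n (heis_mult n (ce (Suc m) (g (Suc m))) ?c) g"
        by (simp only: heis_assoc)
      also have "\<dots> = heis_mult n (ce (Suc m) 0) g" using True by (subst ce_add) auto
      also have "ce (Suc m) 0 = (\<lambda>_. 0)" by (auto simp: ce_def)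
      finally show ?thesis using heis_lone[OF Suc.prems(1)] by simp
    qed
    ultimately show ?thesis by simp
  qed
qed

lemma Egen_sub: "Egen n \<subseteq> heis_carrier n" by (auto simp: Egen_def ce_carrier)

lemma heis_generated: "generate (heis n) (Egen n) = heis_carrier n"
proof
  interpret group "heis n" by (rule heis_group)
  show "generate (heis n) (Egen n) \<subseteq> heis_carrier n"
    using generate_incl[of "Egen n"] Egen_sub by simp
  show "heis_carrier n \<subseteq> generate (heis n) (Egen n)"
    using heis_gen_aux[of _ n "2*n"] by auto
qed

lemma Egen_finite: "finite (Egen n)" by (simp add: Egen_def)

definition coef :: "nat \<Rightarrow> (nat \<Rightarrow> int) \<Rightarrow> nat \<Rightarrow> nat \<Rightarrow> int" where
  "coef n g b b' = (if b = b' then 1 else 0)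
     + (if b < 2*n \<and> b' = 2*n+1 then - g (b+1) else 0)
     + (if b = 2*n \<and> n \<le> b' \<and> b' < 2*n then g (b'+1-n) else 0)
     + (if b = 2*n \<and> b' = 2*n+1 then - g (2*n+1) - (\<Sum>k=1..n. g (n+k) * g k) else 0)"

definition Rmat :: "nat \<Rightarrow> (nat \<Rightarrow> nat) \<Rightarrow> (nat \<Rightarrow> int) \<Rightarrow> int mat" where
  "Rmat n \<sigma> g = mat (2*n+2) (2*n+2) (\<lambda>(p,q). coef n g (\<sigma> p) (\<sigma> q))"

lemma Rmat_index[simp]: "p < 2*n+2 \<Longrightarrow> q < 2*n+2 \<Longrightarrow> Rmat n \<sigma> g $$ (p,q) = coef n g (\<sigma> p) (\<sigma> q)"
  by (simp add: Rmat_def)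

lemma Rmat_carrier[simp]: "Rmat n \<sigma> g \<in> carrier_mat (2*n+2) (2*n+2)"
  by (simp add: Rmat_def)

lemma NB_lo: "b \<le> 2*n \<Longrightarrow> nickel_basis n b h = of_int (h (b+1))"
  by (simp add: nickel_basis_def)
lemma NB_top: "nickel_basis n (2*n+1) h = 1"
  by (simp add: nickel_basis_def)

lemma NB_top': "nickel_basis n (Suc (2*n)) h = 1"
  by (simp add: nickel_basis_def)

lemma sum_delta_mult:
  fixes F :: "nat \<Rightarrow> 'a::comm_ring_1"
  assumes "a < M"
  shows "(\<Sum>b<M. (if b = a then x else 0) * F b) = x * F a"
proof -
  have e: "\<And>b. (if b = a then x else 0) * F b = (if b = a then x * F a else 0)" by simp
  show ?thesis unfolding e using assms by simp
qed

lemma reindex_mid: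
  fixes F :: "nat \<Rightarrow> 'a::comm_ring_1"
  shows "(\<Sum>b<2*n+2. (if n \<le> b \<and> b < 2*n then F b else 0)) = (\<Sum>k=1..n. F (n+k-1))"
proof -
  have "(\<Sum>b<2*n+2. (if n \<le> b \<and> b < 2*n then F b else 0)) = (\<Sum>b\<in>{n..<2*n}. F b)"
    by (subst sum.inter_filter[symmetric]) (auto intro!: sum.cong)
  also have "\<dots> = (\<Sum>k=1..n. F (n+k-1))"
    by (rule sum.reindex_bij_witness[of _ "\<lambda>k. n+k-1" "\<lambda>b. b+1-n"]) auto
  finally show ?thesis .
qed

lemma rep_exist_b:
  assumes g: "g \<in> heis_carrier n" and h: "h \<in> heis_carrier n" and b0: "b0 < 2*n+2"
  shows "dual_act n g (nickel_basis n b0) h = (\<Sum>b<2*n+2. of_int (coef n g b0 b) * nickel_basis n b h)"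
proof -
  have di: "dual_act n g (nickel_basis n b0) h = nickel_basis n b0 (heis_mult n h (hinv n g))"
    using g by (simp add: dual_act_def heis_inv)
  consider "b0 < 2*n" | "b0 = 2*n" | "b0 = 2*n+1" using b0 by linarith
  thus ?thesis
  proof cases
    case 1
    have pw: "of_int (coef n g b0 b) * nickel_basis n b h = (if b = b0 then 1 else 0) * nickel_basis n b h + (if b = 2*n+1 then of_int (- g (b0+1)) else 0) * nickel_basis n b h" for b
      using 1 by (cases "b = b0"; cases "b = 2*n+1") (auto simp: coef_def)
    have "(\<Sum>b<2*n+2. of_int (coef n g b0 b) * nickel_basis n b h)
       = (\<Sum>b<2*n+2. (if b = b0 then 1 else 0) * nickel_basis n b h) + (\<Sum>b<2*n+2. (if b = 2*n+1 then of_int (- g (b0+1)) else 0) * nickel_basis n b h)"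
      unfolding pw by (rule sum.distrib)
    also have "\<dots> = nickel_basis n b0 h + of_int (- g (b0+1))"
      using 1 by (simp only: sum_delta_mult b0) (simp add: NB_top NB_top')
    also have "\<dots> = nickel_basis n b0 (heis_mult n h (hinv n g))"
      using 1 by (simp add: NB_lo heis_mult_def hinv_def)
    finally show ?thesis using di by simp
  next
    case 2
    define X where "X = - g (2*n+1) - (\<Sum>k=1..n. g (n+k) * g k)"
    have pw: "of_int (coef n g b0 b) * nickel_basis n b h = (if b = 2*n then 1 else 0) * nickel_basis n b h
        + (if n \<le> b \<and> b < 2*n then of_int (g (b+1-n)) * nickel_basis n b h else 0)
        + (if b = 2*n+1 then of_int X else 0) * nickel_basis n b h" for b
      using 2 by (cases "b = 2*n"; cases "n \<le> b \<and> b < 2*n"; cases "b = 2*n+1") (auto simp: coef_def X_def)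
    have t1: "(\<Sum>b<2*n+2. (if b = 2*n then 1 else 0) * nickel_basis n b h) = of_int (h (2*n+1))"
      by (subst sum_delta_mult) (auto simp: NB_lo)
    have t2: "(\<Sum>b<2*n+2. (if n \<le> b \<and> b < 2*n then of_int (g (b+1-n)) * nickel_basis n b h else 0))
        = (\<Sum>k=1..n. of_int (g k) * of_int (h (n+k)))"
      unfolding reindex_mid by (rule sum.cong) (auto simp: NB_lo)
    have t3: "(\<Sum>b<2*n+2. (if b = 2*n+1 then of_int X else 0) * nickel_basis n b h) = of_int X"
      by (subst sum_delta_mult) (auto simp: NB_top NB_top')
    have "(\<Sum>b<2*n+2. of_int (coef n g b0 b) * nickel_basis n b h)
       = of_int (h (2*n+1)) + (\<Sum>k=1..n. of_int (g k) * of_int (h (n+k))) + of_int X"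
      unfolding pw sum.distrib t1 t2 t3 ..
    also have "\<dots> = of_int (h (2*n+1) + (\<Sum>k=1..n. g k * h (n+k)) + X)" by simp
    also have "h (2*n+1) + (\<Sum>k=1..n. g k * h (n+k)) + X = heis_mult n h (hinv n g) (2*n+1)"
    proof -
      have s: "(\<Sum>k=1..n. h (n+k) * hinv n g k) = (\<Sum>k=1..n. - (g k * h (n+k)))"
        by (rule sum.cong) (auto simp: hinv_def)
      have t: "hinv n g (2*n+1) = X" by (simp add: hinv_def X_def)
      show ?thesis by (simp only: hm_top s t) (simp add: sum_negf)
    qed
    finally show ?thesis using di 2 by (simp add: NB_lo)
  next
    case 3
    have c: "\<And>b. of_int (coef n g b0 b) * nickel_basis n b h = (if b = 2*n+1 then 1 else 0) * nickel_basis n b h"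
      using 3 by (auto simp: coef_def)
    show ?thesis unfolding c di using 3
      by (subst sum_delta_mult) (auto simp: NB_top NB_top')
  qed
qed

lemma NB_zero: "b < 2*n+2 \<Longrightarrow> nickel_basis n b (\<lambda>_. 0) = (if b = 2*n+1 then 1 else 0)"
  by (auto simp: nickel_basis_def)

lemma NB_unit: "b < 2*n+2 \<Longrightarrow> j \<le> 2*n \<Longrightarrow> nickel_basis n b (ce (j+1) 1) = (if b = j then 1 else 0) + (if b = 2*n+1 then 1 else 0)"
  by (auto simp: nickel_basis_def ce_def)

lemma nb_indep:
  fixes c :: "nat \<Rightarrow> rat"
  assumes z: "\<forall>h\<in>heis_carrier n. (\<Sum>b<2*n+2. c b * nickel_basis n b h) = 0" and b: "b < 2*n+2"
  shows "c b = 0"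
proof -
  have "(\<Sum>b<2*n+2. c b * nickel_basis n b (\<lambda>_. 0)) = (\<Sum>b<2*n+2. (if b = 2*n+1 then 1 else 0) * c b)"
    by (rule sum.cong) (auto simp: NB_zero)
  also have "\<dots> = c (2*n+1)" by (subst sum_delta_mult) auto
  finally have c1: "c (2*n+1) = 0" using z heis_zero by auto
  show ?thesis
  proof (cases "b = 2*n+1")
    case True thus ?thesis using c1 by simp
  next
    case False
    hence bj: "b \<le> 2*n" using b by simp
    have "(\<Sum>b'<2*n+2. c b' * nickel_basis n b' (ce (b+1) 1)) = (\<Sum>b'<2*n+2. (if b' = b then 1 else 0) * c b') + (\<Sum>b'<2*n+2. (if b' = 2*n+1 then 1 else 0) * c b')"
    proof -
      have pw: "c b' * nickel_basis n b' (ce (b+1) 1) = (if b' = b then 1 else 0) * c b' + (if b' = 2*n+1 then 1 else 0) * c b'" if "b' < 2*n+2" for b'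
        unfolding NB_unit[OF that bj] by (simp add: algebra_simps)
      have "(\<Sum>b'<2*n+2. c b' * nickel_basis n b' (ce (b+1) 1)) = (\<Sum>b'<2*n+2. (if b' = b then 1 else 0) * c b' + (if b' = 2*n+1 then 1 else 0) * c b')"
        by (rule sum.cong[OF refl]) (rule pw, simp)
      thus ?thesis by (simp only: sum.distrib)
    qed
    also have "\<dots> = c b + c (2*n+1)" using b by (simp only: sum_delta_mult)
    finally have "c b + c (2*n+1) = 0" using z ce_carrier[of "b+1" n 1] bj by auto
    thus ?thesis using c1 by simp
  qed
qed

definition Pp :: "nat \<Rightarrow> (nat \<Rightarrow> nat) \<Rightarrow> (nat \<Rightarrow> int) \<Rightarrow> int mat \<Rightarrow> bool" where
  "Pp n \<sigma> g A \<longleftrightarrow> A \<in> carrier_mat (2*n+2) (2*n+2) \<and>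
      (\<forall>p < 2*n+2. \<forall>h \<in> heis_carrier n.
         dual_act n g (nickel_basis n (\<sigma> p)) h
           = (\<Sum>q < 2*n+2. of_int (A $$ (p,q)) * nickel_basis n (\<sigma> q) h))"

lemma nickel_rep_Pp: "nickel_rep n \<sigma> g = (THE A. Pp n \<sigma> g A)"
  unfolding nickel_rep_def Pp_def ..

lemma reidx:
  assumes "bij_betw \<sigma> {..<M} {..<M}"
  shows "(\<Sum>q<M. F (\<sigma> q)) = (\<Sum>b<M. F b)"
  using sum.reindex_bij_betw[OF assms] .

lemma Pp_unique:
  assumes bij: "bij_betw \<sigma> {..<2*n+2} {..<2*n+2}" and A: "Pp n \<sigma> g A" and B: "Pp n \<sigma> g B"
  shows "A = B"
proof (rule eq_matI)
  let ?M = "2*n+2"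
  let ?s = "inv_into {..<?M} \<sigma>"
  have sinv: "\<And>q. q < ?M \<Longrightarrow> ?s (\<sigma> q) = q" using bij bij_betw_inv_into_left by fastforce
  fix p q assume pq: "p < dim_row B" "q < dim_col B"
  hence pq: "p < ?M" "q < ?M" using B by (auto simp: Pp_def)
  define c where "c b = of_int (A $$ (p, ?s b)) - (of_int (B $$ (p, ?s b)) :: rat)" for b
  have "\<forall>h\<in>heis_carrier n. (\<Sum>b<?M. c b * nickel_basis n b h) = 0"
  proof
    fix h assume h: "h \<in> heis_carrier n"
    have "(\<Sum>b<?M. c b * nickel_basis n b h) = (\<Sum>q<?M. c (\<sigma> q) * nickel_basis n (\<sigma> q) h)"
      using reidx[OF bij, of "\<lambda>b. c b * nickel_basis n b h"] by simp
    also have "\<dots> = (\<Sum>q<?M. of_int (A $$ (p,q)) * nickel_basis n (\<sigma> q) h) - (\<Sum>q<?M. of_int (B $$ (p,q)) * nickel_basis n (\<sigma> q) h)"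
    proof -
      have "(\<Sum>q<?M. c (\<sigma> q) * nickel_basis n (\<sigma> q) h) = (\<Sum>q<?M. of_int (A $$ (p,q)) * nickel_basis n (\<sigma> q) h - of_int (B $$ (p,q)) * nickel_basis n (\<sigma> q) h)"
      proof (rule sum.cong[OF refl])
        fix q assume "q \<in> {..<?M}"
        hence e: "?s (\<sigma> q) = q" using sinv by blast
        show "c (\<sigma> q) * nickel_basis n (\<sigma> q) h = of_int (A $$ (p,q)) * nickel_basis n (\<sigma> q) h - of_int (B $$ (p,q)) * nickel_basis n (\<sigma> q) h"
          unfolding c_def e by (simp add: algebra_simps)
      qed
      thus ?thesis by (simp only: sum_subtractf)
    qed
    also have "\<dots> = 0" using A B pq h unfolding Pp_def by auto
    finally show "(\<Sum>b<?M. c b * nickel_basis n b h) = 0" .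
  qed
  hence "c (\<sigma> q) = 0" using nb_indep[of n c "\<sigma> q"] bij pq by (auto simp: bij_betw_def)
  moreover have "?s (\<sigma> q) = q" using sinv pq by blast
  ultimately show "A $$ (p,q) = B $$ (p,q)" unfolding c_def by simp
next
  show "dim_row A = dim_row B" "dim_col A = dim_col B" using A B by (auto simp: Pp_def)
qed

lemma Pp_Rmat:
  assumes bij: "bij_betw \<sigma> {..<2*n+2} {..<2*n+2}" and g: "g \<in> heis_carrier n"
  shows "Pp n \<sigma> g (Rmat n \<sigma> g)"
  unfolding Pp_def
proof (intro conjI allI impI ballI)
  fix p h assume p: "p < 2*n+2" and h: "h \<in> heis_carrier n"
  have sp: "\<sigma> p < 2*n+2" using bij p by (auto simp: bij_betw_def)
  have "dual_act n g (nickel_basis n (\<sigma> p)) h = (\<Sum>b<2*n+2. of_int (coef n g (\<sigma> p) b) * nickel_basis n b h)"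
    by (rule rep_exist_b[OF g h sp])
  also have "\<dots> = (\<Sum>q<2*n+2. of_int (coef n g (\<sigma> p) (\<sigma> q)) * nickel_basis n (\<sigma> q) h)"
    using reidx[OF bij, of "\<lambda>b. of_int (coef n g (\<sigma> p) b) * nickel_basis n b h"] by simp
  also have "\<dots> = (\<Sum>q<2*n+2. of_int (Rmat n \<sigma> g $$ (p,q)) * nickel_basis n (\<sigma> q) h)"
    using p by (intro sum.cong) auto
  finally show "dual_act n g (nickel_basis n (\<sigma> p)) h = (\<Sum>q<2*n+2. of_int (Rmat n \<sigma> g $$ (p,q)) * nickel_basis n (\<sigma> q) h)" .
qed (rule Rmat_carrier)

lemma nickel_rep_eq:
  assumes bij: "bij_betw \<sigma> {..<2*n+2} {..<2*n+2}" and g: "g \<in> heis_carrier n"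
  shows "nickel_rep n \<sigma> g = Rmat n \<sigma> g"
  unfolding nickel_rep_Pp
  using Pp_Rmat[OF bij g] Pp_unique[OF bij] by (intro the_equality) auto

lemma Rmat_mult:
  assumes bij: "bij_betw \<sigma> {..<2*n+2} {..<2*n+2}" and g: "g \<in> heis_carrier n" and g': "g' \<in> heis_carrier n"
  shows "Rmat n \<sigma> (heis_mult n g g') = Rmat n \<sigma> g * Rmat n \<sigma> g'"
proof -
  interpret group "heis n" by (rule heis_group)
  let ?M = "2*n+2"
  let ?R = "Rmat n \<sigma> g" and ?R' = "Rmat n \<sigma> g'"
  have P: "Pp n \<sigma> g ?R" and P': "Pp n \<sigma> g' ?R'" using Pp_Rmat bij g g' by auto
  have "Pp n \<sigma> (heis_mult n g g') (?R * ?R')"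
    unfolding Pp_def
  proof (intro conjI allI impI ballI)
    show "?R * ?R' \<in> carrier_mat ?M ?M" by (rule mult_carrier_mat[OF Rmat_carrier Rmat_carrier])
    fix p h assume p: "p < ?M" and h: "h \<in> heis_carrier n"
    have hg: "heis_mult n h (inv\<^bsub>heis n\<^esub> g') \<in> heis_carrier n" using h g' by (simp add: heis_closed)
    have "dual_act n (heis_mult n g g') (nickel_basis n (\<sigma> p)) h
        = nickel_basis n (\<sigma> p) (heis_mult n (heis_mult n h (inv\<^bsub>heis n\<^esub> g')) (inv\<^bsub>heis n\<^esub> g))"
      using g g' h inv_mult_group[of g g'] by (simp add: dual_act_def heis_assoc)
    also have "\<dots> = dual_act n g (nickel_basis n (\<sigma> p)) (heis_mult n h (inv\<^bsub>heis n\<^esub> g'))"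
      by (simp add: dual_act_def)
    also have "\<dots> = (\<Sum>q<?M. of_int (?R $$ (p,q)) * nickel_basis n (\<sigma> q) (heis_mult n h (inv\<^bsub>heis n\<^esub> g')))"
      using P p hg unfolding Pp_def by blast
    also have "\<dots> = (\<Sum>q<?M. of_int (?R $$ (p,q)) * dual_act n g' (nickel_basis n (\<sigma> q)) h)"
      by (simp add: dual_act_def)
    also have "\<dots> = (\<Sum>q<?M. of_int (?R $$ (p,q)) * (\<Sum>r<?M. of_int (?R' $$ (q,r)) * nickel_basis n (\<sigma> r) h))"
      using P' h unfolding Pp_def by (intro sum.cong) auto
    also have "\<dots> = (\<Sum>r<?M. (\<Sum>q<?M. of_int (?R $$ (p,q)) * of_int (?R' $$ (q,r))) * nickel_basis n (\<sigma> r) h)"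
      by (simp only: sum_distrib_left sum_distrib_right mult.assoc) (rule sum.swap)
    also have "\<dots> = (\<Sum>r<?M. of_int ((?R * ?R') $$ (p,r)) * nickel_basis n (\<sigma> r) h)"
    proof (rule sum.cong[OF refl])
      fix r assume "r \<in> {..<?M}"
      hence r: "r < ?M" by simp
      have "(?R * ?R') $$ (p,r) = (\<Sum>q<?M. ?R $$ (p,q) * ?R' $$ (q,r))"
        by (rule mult_entry[OF Rmat_carrier Rmat_carrier p r])
      hence "of_int ((?R * ?R') $$ (p,r)) = (\<Sum>q<?M. of_int (?R $$ (p,q)) * (of_int (?R' $$ (q,r)) :: rat))"
        by (simp only: of_int_sum of_int_mult)
      thus "(\<Sum>q<?M. of_int (?R $$ (p,q)) * of_int (?R' $$ (q,r))) * nickel_basis n (\<sigma> r) h = of_int ((?R * ?R') $$ (p,r)) * nickel_basis n (\<sigma> r) h"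
        by simp
    qed
    finally show "dual_act n (heis_mult n g g') (nickel_basis n (\<sigma> p)) h = (\<Sum>r<?M. of_int ((?R * ?R') $$ (p,r)) * nickel_basis n (\<sigma> r) h)" .
  qed
  moreover have "Pp n \<sigma> (heis_mult n g g') (Rmat n \<sigma> (heis_mult n g g'))"
    using Pp_Rmat bij heis_closed by auto
  ultimately show ?thesis using Pp_unique[OF bij] by metis
qed

context group begin

lemma foldr_closed: "set ws \<subseteq> carrier G \<Longrightarrow> foldr (\<otimes>) ws \<one> \<in> carrier G"
  by (induction ws) auto

lemma foldr_append:
  "set ws \<subseteq> carrier G \<Longrightarrow> set vs \<subseteq> carrier G \<Longrightarrow> foldr (\<otimes>) (ws @ vs) \<one> = foldr (\<otimes>) ws \<one> \<otimes> foldr (\<otimes>) vs \<one>"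
proof (induction ws)
  case Nil thus ?case using foldr_closed[of vs] by simp
next
  case (Cons a ws)
  thus ?case using foldr_closed[of ws] foldr_closed[of vs] by (simp add: m_assoc)
qed

lemma foldr_inv:
  "set ws \<subseteq> carrier G \<Longrightarrow> foldr (\<otimes>) (rev (map (\<lambda>x. inv x) ws)) \<one> = inv (foldr (\<otimes>) ws \<one>)"
proof (induction ws)
  case Nil thus ?case by simp
next
  case (Cons a ws)
  have "foldr (\<otimes>) (rev (map (\<lambda>x. inv x) (a # ws))) \<one> = foldr (\<otimes>) (rev (map (\<lambda>x. inv x) ws)) \<one> \<otimes> foldr (\<otimes>) [inv a] \<one>"
    using Cons.prems by (simp only: rev.simps list.map, intro foldr_append) auto
  also have "\<dots> = inv (foldr (\<otimes>) ws \<one>) \<otimes> inv a" using Cons by simp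
  also have "\<dots> = inv (a \<otimes> foldr (\<otimes>) ws \<one>)" using Cons.prems foldr_closed[of ws] by (simp add: inv_mult_group)
  finally show ?case by simp
qed

lemma inv_word_set:
  "T \<subseteq> carrier G \<Longrightarrow> set ws \<subseteq> T \<union> (\<lambda>s. inv s) ` T \<Longrightarrow> set (rev (map (\<lambda>x. inv x) ws)) \<subseteq> T \<union> (\<lambda>s. inv s) ` T"
  by (auto simp: subset_iff)

lemma word_set_carrier: "T \<subseteq> carrier G \<Longrightarrow> set ws \<subseteq> T \<union> (\<lambda>s. inv s) ` T \<Longrightarrow> set ws \<subseteq> carrier G"
  by auto

lemma gen_word:
  assumes T: "T \<subseteq> carrier G" and x: "x \<in> generate G T"
  shows "\<exists>ws. set ws \<subseteq> T \<union> (\<lambda>s. inv s) ` T \<and> foldr (\<otimes>) ws \<one> = x"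
  using x
proof (induction rule: generate.induct)
  case one thus ?case by (intro exI[of _ "[]"]) simp
next
  case (incl h) thus ?case using T by (intro exI[of _ "[h]"]) auto
next
  case (inv h) thus ?case using T by (intro exI[of _ "[inv h]"]) auto
next
  case (eng h1 h2)
  then obtain w1 w2 where "set w1 \<subseteq> T \<union> (\<lambda>s. inv s) ` T" "foldr (\<otimes>) w1 \<one> = h1"
     "set w2 \<subseteq> T \<union> (\<lambda>s. inv s) ` T" "foldr (\<otimes>) w2 \<one> = h2" by blast
  thus ?case using foldr_append[of w1 w2] word_set_carrier[OF T] by (intro exI[of _ "w1 @ w2"]) auto
qed

lemma wl_le:
  "set ws \<subseteq> T \<union> (\<lambda>s. inv s) ` T \<Longrightarrow> foldr (\<otimes>) ws \<one> = x \<Longrightarrow> word_length G T x \<le> length ws"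
  unfolding word_length_def by (rule Least_le) blast

lemma wl_ex:
  assumes T: "T \<subseteq> carrier G" and x: "x \<in> generate G T"
  shows "\<exists>ws. length ws = word_length G T x \<and> set ws \<subseteq> T \<union> (\<lambda>s. inv s) ` T \<and> foldr (\<otimes>) ws \<one> = x"
proof -
  obtain ws where "set ws \<subseteq> T \<union> (\<lambda>s. inv s) ` T \<and> foldr (\<otimes>) ws \<one> = x" using gen_word[OF T x] by blast
  hence "\<exists>k ws. length ws = k \<and> set ws \<subseteq> T \<union> (\<lambda>s. inv s) ` T \<and> foldr (\<otimes>) ws \<one> = x" by blast
  from LeastI_ex[OF this] show ?thesis unfolding word_length_def .
qed

end

lemma el_comm:
  assumes "i < j" "j < k" "k < N"
  shows "el N i j (-c) * (el N j k (-d) * (el N i j c * el N j k d)) = el N i k (c*d)"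
proof -
  have "el N i j (-c) * (el N j k (-d) * (el N i j c * el N j k d))
      = hm N i j k (-c) 0 0 * (hm N i j k 0 (-d) 0 * (hm N i j k c 0 0 * hm N i j k 0 d 0))"
    by (simp only: hm_el1 hm_el2)
  also have "\<dots> = hm N i j k 0 0 (c*d)" using assms by (simp add: hm_mult)
  also have "\<dots> = el N i k (c*d)" by (rule hm_el3)
  finally show ?thesis .
qed

lemma prod_bound:
  fixes M :: int
  assumes "\<forall>g\<in>set gs. \<forall>i. \<bar>g i\<bar> \<le> M" "M \<ge> 0"
  shows "(\<forall>i. 1 \<le> i \<and> i \<le> 2*n \<longrightarrow> \<bar>foldr (heis_mult n) gs (\<lambda>_. 0) i\<bar> \<le> int (length gs) * M)
       \<and> \<bar>foldr (heis_mult n) gs (\<lambda>_. 0) (2*n+1)\<bar> \<le> int (length gs) * M + int n * M^2 * int (length gs)^2"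
  using assms(1)
proof (induction gs)
  case Nil thus ?case by simp
next
  case (Cons g gs)
  let ?P = "foldr (heis_mult n) gs (\<lambda>_. 0)"
  let ?L = "int (length gs)"
  have gM: "\<And>i. \<bar>g i\<bar> \<le> M" using Cons.prems by simp
  have IH: "\<forall>i. 1 \<le> i \<and> i \<le> 2*n \<longrightarrow> \<bar>?P i\<bar> \<le> ?L * M" "\<bar>?P (2*n+1)\<bar> \<le> ?L * M + int n * M^2 * ?L^2"
    using Cons by auto
  have A: "\<bar>heis_mult n g ?P i\<bar> \<le> (?L+1) * M" if "1 \<le> i" "i \<le> 2*n" for i
  proof -
    have "heis_mult n g ?P i = g i + ?P i" using that by (simp add: heis_mult_def)
    thus ?thesis using gM[of i] IH(1) that by (simp add: algebra_simps) (smt (verit))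
  qed
  have Sb: "\<bar>\<Sum>k=1..n. g (n+k) * ?P k\<bar> \<le> int n * (M * (?L * M))"
  proof -
    have "\<bar>\<Sum>k=1..n. g (n+k) * ?P k\<bar> \<le> (\<Sum>k=1..n. \<bar>g (n+k) * ?P k\<bar>)" by (rule sum_abs)
    also have "\<dots> \<le> of_nat (card {1..n}) * (M * (?L * M))"
    proof (rule sum_bounded_above)
      fix k assume k: "k \<in> {1..n}"
      have "\<bar>g (n+k) * ?P k\<bar> = \<bar>g (n+k)\<bar> * \<bar>?P k\<bar>" by (simp add: abs_mult)
      also have "\<dots> \<le> M * (?L * M)" using gM IH(1) k assms(2) by (intro mult_mono) auto
      finally show "\<bar>g (n+k) * ?P k\<bar> \<le> M * (?L * M)" .
    qed
    finally show ?thesis by simp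
  qed
  have B: "\<bar>heis_mult n g ?P (2*n+1)\<bar> \<le> (?L+1) * M + int n * M^2 * (?L+1)^2"
  proof -
    have "heis_mult n g ?P (2*n+1) = g (2*n+1) + ?P (2*n+1) - (\<Sum>k=1..n. g (n+k) * ?P k)" by (rule hm_top)
    hence "\<bar>heis_mult n g ?P (2*n+1)\<bar> \<le> M + (?L * M + int n * M^2 * ?L^2) + int n * (M * (?L * M))"
      using gM[of "2*n+1"] IH(2) Sb by linarith
    also have "\<dots> \<le> (?L+1) * M + int n * M^2 * (?L+1)^2"
    proof -
      have "int n * M^2 * ?L^2 + int n * (M * (?L * M)) = int n * M^2 * (?L^2 + ?L)" by (simp add: algebra_simps power2_eq_square)
      also have "\<dots> \<le> int n * M^2 * (?L+1)^2"
        using assms(2) by (intro mult_left_mono) (auto simp: power2_eq_square algebra_simps)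
      finally show ?thesis by (simp add: algebra_simps)
    qed
    finally show ?thesis .
  qed
  show ?case using A B by (simp add: add.commute)
qed

lemma coef_z: "coef n (ce (2*n+1) c) b b' = (if b = b' then 1 else 0) + (if b = 2*n \<and> b' = 2*n+1 then -c else 0)"
proof -
  have "(\<Sum>k=1..n. ce (2*n+1) c (n+k) * ce (2*n+1) c k) = 0" by (rule sum.neutral) (auto simp: ce_def)
  thus ?thesis by (auto simp: coef_def ce_def)
qed

locale heisctx =
  fixes n :: nat and \<sigma> :: "nat \<Rightarrow> nat"
  assumes n2: "n \<ge> 2"
    and bij: "bij_betw \<sigma> {..<2*n+2} {..<2*n+2}"
    and ut: "\<forall>g \<in> carrier (heis n). nickel_rep n \<sigma> g \<in> UT (2*n+2)"
begin

definition si where "si = inv_into {..<2*n+2} \<sigma>"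

lemma sig_lt: "x < 2*n+2 \<Longrightarrow> \<sigma> x < 2*n+2"
  using bij by (auto simp: bij_betw_def)

lemma sinv_lt: "b < 2*n+2 \<Longrightarrow> si b < 2*n+2"
  using bij_betw_inv_into[OF bij] unfolding si_def by (auto simp: bij_betw_def)

lemma sig_sinv: "b < 2*n+2 \<Longrightarrow> \<sigma> (si b) = b"
  using bij unfolding si_def by (simp add: bij_betw_inv_into_right)

lemma sinv_sig: "x < 2*n+2 \<Longrightarrow> si (\<sigma> x) = x"
  using bij unfolding si_def by (simp add: bij_betw_inv_into_left)

lemma sig_inj: "x < 2*n+2 \<Longrightarrow> y < 2*n+2 \<Longrightarrow> \<sigma> x = \<sigma> y \<Longrightarrow> x = y"
  using sinv_sig by metis

lemma rho_eq: "g \<in> heis_carrier n \<Longrightarrow> nickel_rep n \<sigma> g = Rmat n \<sigma> g"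
  using nickel_rep_eq[OF bij] by simp

lemma Rmat_UT: "g \<in> heis_carrier n \<Longrightarrow> Rmat n \<sigma> g \<in> UT (2*n+2)"
  using ut rho_eq by auto

lemma entry: "x < 2*n+2 \<Longrightarrow> y < 2*n+2 \<Longrightarrow> Rmat n \<sigma> g $$ (si x, si y) = coef n g x y"
  using sinv_lt sig_sinv by simp

lemma pos_lt:
  assumes g: "g \<in> heis_carrier n" and xy: "x < 2*n+2" "y < 2*n+2" "x \<noteq> y" and c: "coef n g x y \<noteq> 0"
  shows "si x < si y"
proof -
  have "si x \<noteq> si y" using xy sig_sinv by metis
  moreover have "\<not> si y < si x"
  proof
    assume "si y < si x"
    hence "Rmat n \<sigma> g $$ (si x, si y) = 0" using UT_low[OF Rmat_UT[OF g] sinv_lt[OF xy(1)]] by simp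
    thus False using entry[OF xy(1,2)] c by simp
  qed
  ultimately show ?thesis by simp
qed

lemma positions: "\<exists>r s. si (2*n) < r \<and> r < s \<and> s < si (2*n+1)"
proof -
  have c1: "coef n (ce 1 1) (2*n) n \<noteq> 0" using n2 by (simp add: coef_def ce_def)
  have c2: "coef n (ce 2 1) (2*n) (n+1) \<noteq> 0" using n2 by (simp add: coef_def ce_def)
  have c3: "coef n (ce (n+1) 1) n (2*n+1) \<noteq> 0" using n2 by (simp add: coef_def ce_def)
  have c4: "coef n (ce (n+2) 1) (n+1) (2*n+1) \<noteq> 0" using n2 by (simp add: coef_def ce_def)
  have a1: "si (2*n) < si n" using pos_lt[OF ce_carrier _ _ _ c1] n2 by simp
  have a2: "si (2*n) < si (n+1)" using pos_lt[OF ce_carrier _ _ _ c2] n2 by simp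
  have a3: "si n < si (2*n+1)" using pos_lt[OF ce_carrier _ _ _ c3] n2 by simp
  have a4: "si (n+1) < si (2*n+1)" using pos_lt[OF ce_carrier _ _ _ c4] n2 by simp
  have ne: "si n \<noteq> si (n+1)"
  proof
    assume "si n = si (n+1)"
    hence "\<sigma> (si n) = \<sigma> (si (n+1))" by simp
    thus False using sig_sinv[of n] sig_sinv[of "n+1"] n2 by simp
  qed
  show ?thesis
  proof (cases "si n < si (n+1)")
    case True thus ?thesis using a1 a4 by blast
  next
    case False hence "si (n+1) < si n" using ne by simp
    thus ?thesis using a2 a3 by blast
  qed
qed

lemma rho_z: "nickel_rep n \<sigma> (ce (2*n+1) c) = el (2*n+2) (si (2*n)) (si (2*n+1)) (-c)"
proof -
  have "Rmat n \<sigma> (ce (2*n+1) c) = el (2*n+2) (si (2*n)) (si (2*n+1)) (-c)"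
  proof (rule eq_matI)
    fix a b assume ab: "a < dim_row (el (2*n+2) (si (2*n)) (si (2*n+1)) (-c))" "b < dim_col (el (2*n+2) (si (2*n)) (si (2*n+1)) (-c))"
    hence ab: "a < 2*n+2" "b < 2*n+2" by auto
    have e1: "(\<sigma> a = \<sigma> b) = (a = b)" using sig_inj ab by auto
    have e2: "(\<sigma> a = 2*n) = (a = si (2*n))" using sinv_sig[OF ab(1)] sig_sinv[of "2*n"] by auto
    have e3: "(\<sigma> b = 2*n+1) = (b = si (2*n+1))" using sinv_sig[OF ab(2)] sig_sinv[of "2*n+1"] by auto
    show "Rmat n \<sigma> (ce (2*n+1) c) $$ (a,b) = el (2*n+2) (si (2*n)) (si (2*n+1)) (-c) $$ (a,b)"
      using ab by (simp only: Rmat_index el_index coef_z e1 e2 e3)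
  qed (auto simp: Rmat_def)
  thus ?thesis using rho_eq ce_carrier[of "2*n+1" n c] by simp
qed

lemma rho_hom: "nickel_rep n \<sigma> \<in> hom (heis n) (UT_group (2*n+2))"
  unfolding hom_def using ut by (auto simp: rho_eq heis_closed Rmat_mult[OF bij])

lemma rho_group_hom: "group_hom (heis n) (UT_group (2*n+2)) (nickel_rep n \<sigma>)"
  unfolding group_hom_def group_hom_axioms_def using heis_group UT_group_group rho_hom by auto

lemma rho_inj:
  assumes x: "x \<in> heis_carrier n" and y: "y \<in> heis_carrier n" and e: "nickel_rep n \<sigma> x = nickel_rep n \<sigma> y"
  shows "x = y"
proof -
  have R: "Rmat n \<sigma> x = Rmat n \<sigma> y" using e rho_eq x y by simp
  have cl: "coef n g b (2*n+1) = - g (b+1)" if "b < 2*n" for g b using that by (simp add: coef_def)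
  have lo: "x (b+1) = y (b+1)" if "b < 2*n" for b
  proof -
    have "coef n x b (2*n+1) = coef n y b (2*n+1)" using entry[of b "2*n+1" x] entry[of b "2*n+1" y] R that by simp
    thus ?thesis using cl[OF that] by simp
  qed
  have lo': "x i = y i" if "1 \<le> i" "i \<le> 2*n" for i using lo[of "i-1"] that by simp
  have l1: "2*n < 2*n+2" "2*n+1 < 2*n+2" by simp_all
  have "coef n x (2*n) (2*n+1) = coef n y (2*n) (2*n+1)" using entry[OF l1, of x] entry[OF l1, of y] R by metis
  moreover have "(\<Sum>k=1..n. x (n+k) * x k) = (\<Sum>k=1..n. y (n+k) * y k)" by (rule sum.cong) (auto simp: lo')
  ultimately have top: "x (2*n+1) = y (2*n+1)" by (simp add: coef_def)
  show ?thesis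
  proof
    fix i
    show "x i = y i"
    proof (cases "i = 0 \<or> i > 2*n+1")
      case True thus ?thesis using x y by (auto simp: heis_carrier_def)
    next
      case False thus ?thesis using lo' top by (cases "i = 2*n+1") auto
    qed
  qed
qed

end

lemma arith_contra:
  fixes a k M E nn :: real
  assumes a: "a \<ge> 1" and k: "0 \<le> k" "k \<le> E * a" and c: "a^3 \<le> k*M + nn*M^2*k^2" and M: "M \<ge> 0" and nn: "nn \<ge> 0"
  shows "a \<le> E*M + nn*M^2*E^2"
proof -
  have Ea: "0 \<le> E * a" using k by linarith
  have E: "E \<ge> 0" using Ea a by (simp add: zero_le_mult_iff)
  have k1: "k*M \<le> (E*a)*M" using k M by (intro mult_right_mono) auto
  have "k^2 \<le> (E*a)^2" using k by (intro power_mono) auto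
  hence k2: "nn*M^2*k^2 \<le> nn*M^2*(E*a)^2" using nn by (intro mult_left_mono) auto
  have EM: "0 \<le> E*M" using E M by simp
  have aa: "a \<le> a*a" using a by (simp add: mult_le_cancel_left1)
  have k3: "(E*a)*M \<le> (a*a)*(E*M)"
  proof -
    have "(E*a)*M = a*(E*M)" by (simp add: algebra_simps)
    also have "\<dots> \<le> (a*a)*(E*M)" using aa EM by (intro mult_right_mono) auto
    finally show ?thesis .
  qed
  have eq1: "nn*M^2*(E*a)^2 = (a*a)*(nn*M^2*E^2)" by (simp add: algebra_simps power2_eq_square)
  have eq2: "a^3 = a * (a*a)" by (simp add: power3_eq_cube)
  have "a * (a*a) \<le> (E*M + nn*M^2*E^2) * (a*a)"
  proof -
    have eq3: "E*M*(a*a) = a*a*(E*M)" "nn*M^2*E^2*(a*a) = a*a*(nn*M^2*E^2)" by (simp_all only: mult.commute)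
    show ?thesis using c k1 k2 k3 eq1 eq2 eq3 unfolding distrib_right by linarith
  qed
  moreover have "a*a > 0" using a by simp
  ultimately show ?thesis by (rule mult_right_le_imp_le)
qed

context heisctx begin

abbreviation "KK \<equiv> UT_group (2*n+2)"
abbreviation "HH \<equiv> nickel_rep n \<sigma> ` heis_carrier n"

lemma subHH: "subgroup HH KK"
proof -
  interpret rho: group_hom "heis n" KK "nickel_rep n \<sigma>" by (rule rho_group_hom)
  show ?thesis using rho.img_is_subgroup by simp
qed

lemma pow_word:
  assumes ij: "i < j" "j < 2*n+2" and w: "set w \<subseteq> UT (2*n+2)" "foldr (*) w (1\<^sub>m (2*n+2)) = el (2*n+2) i j 1"
  shows "foldr (*) (concat (replicate a w)) (1\<^sub>m (2*n+2)) = el (2*n+2) i j (int a)"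
proof (induction a)
  case 0
  have "1\<^sub>m (2*n+2) = el (2*n+2) i j 0" by (rule eq_matI) auto
  thus ?case by simp
next
  case (Suc a)
  interpret K: group KK by (rule UT_group_group)
  have "foldr (*) (concat (replicate (Suc a) w)) (1\<^sub>m (2*n+2)) = foldr (*) w (1\<^sub>m (2*n+2)) * foldr (*) (concat (replicate a w)) (1\<^sub>m (2*n+2))"
  proof -
    have sc: "set (concat (replicate a w)) \<subseteq> carrier KK" using w(1) by (cases a) auto
    have "foldr (\<otimes>\<^bsub>KK\<^esub>) (w @ concat (replicate a w)) \<one>\<^bsub>KK\<^esub> = foldr (\<otimes>\<^bsub>KK\<^esub>) w \<one>\<^bsub>KK\<^esub> \<otimes>\<^bsub>KK\<^esub> foldr (\<otimes>\<^bsub>KK\<^esub>) (concat (replicate a w)) \<one>\<^bsub>KK\<^esub>"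
      by (rule K.foldr_append) (use w(1) sc in auto)
    thus ?thesis by simp
  qed
  also have "\<dots> = el (2*n+2) i j (1 + int a)" using Suc w el_add[of i j "2*n+2" 1 "int a"] ij by simp
  finally show ?case by (simp add: add.commute)
qed

lemma inv_word:
  assumes ij: "i < j" "j < 2*n+2" and w: "set w \<subseteq> UT (2*n+2)" "foldr (*) w (1\<^sub>m (2*n+2)) = el (2*n+2) i j c"
  shows "foldr (*) (rev (map (\<lambda>x. inv\<^bsub>KK\<^esub> x) w)) (1\<^sub>m (2*n+2)) = el (2*n+2) i j (-c)"
proof -
  interpret K: group KK by (rule UT_group_group)
  show ?thesis using K.foldr_inv[of w] w el_inv[OF ij] by simp
qed

lemma lower:
  assumes S: "finite S" "S \<subseteq> HH"
  shows "\<exists>M\<ge>0. \<forall>ws c. set ws \<subseteq> S \<union> (\<lambda>x. inv\<^bsub>KK\<lparr>carrier := HH\<rparr>\<^esub> x) ` S \<longrightarrow>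
           foldr (*) ws (1\<^sub>m (2*n+2)) = el (2*n+2) (si (2*n)) (si (2*n+1)) (-c) \<longrightarrow>
           c \<le> int (length ws) * M + int n * M^2 * int (length ws)^2"
proof -
  interpret K: group KK by (rule UT_group_group)
  interpret rho: group_hom "heis n" KK "nickel_rep n \<sigma>" by (rule rho_group_hom)
  interpret Hg: group "heis n" by (rule heis_group)
  interpret KH: group "KK\<lparr>carrier := HH\<rparr>" by (rule subgroup.subgroup_is_group[OF subHH K.is_group])
  define WS where "WS = S \<union> (\<lambda>x. inv\<^bsub>KK\<lparr>carrier := HH\<rparr>\<^esub> x) ` S"
  have WSH: "WS \<subseteq> HH" unfolding WS_def using S(2) KH.inv_closed by auto
  have WSf: "finite WS" unfolding WS_def using S(1) by simp
  define pre where "pre w = inv_into (heis_carrier n) (nickel_rep n \<sigma>) w" for w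
  have pre1: "pre w \<in> heis_carrier n" if "w \<in> HH" for w unfolding pre_def using that by (simp add: inv_into_into)
  have pre2: "nickel_rep n \<sigma> (pre w) = w" if "w \<in> HH" for w unfolding pre_def using that by (simp add: f_inv_into_f)
  define M where "M = (\<Sum>w\<in>WS. \<Sum>i\<in>{..2*n+1}. \<bar>pre w i\<bar>)"
  have M0: "M \<ge> 0" unfolding M_def by (intro sum_nonneg) auto
  have bnd: "\<bar>pre w i\<bar> \<le> M" if w: "w \<in> WS" for w i
  proof (cases "i \<le> 2*n+1")
    case True
    have "\<bar>pre w i\<bar> \<le> (\<Sum>i\<in>{..2*n+1}. \<bar>pre w i\<bar>)" using True by (intro member_le_sum) auto
    also have "\<dots> \<le> M" unfolding M_def using w WSf by (intro member_le_sum[of w]) (auto intro: sum_nonneg)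
    finally show ?thesis .
  next
    case False
    hence "pre w i = 0" using pre1[of w] w WSH by (auto simp: heis_carrier_def)
    thus ?thesis using M0 by simp
  qed
  have fold: "foldr (*) ws (1\<^sub>m (2*n+2)) = nickel_rep n \<sigma> (foldr (heis_mult n) (map pre ws) (\<lambda>_. 0))
       \<and> foldr (heis_mult n) (map pre ws) (\<lambda>_. 0) \<in> heis_carrier n" if "set ws \<subseteq> WS" for ws
    using that
  proof (induction ws)
    case Nil
    have "nickel_rep n \<sigma> (\<lambda>_. 0) = 1\<^sub>m (2*n+2)" using rho.hom_one by simp
    thus ?case by (simp add: heis_zero)
  next
    case (Cons w ws)
    hence w: "w \<in> HH" using WSH by auto
    have IH: "foldr (*) ws (1\<^sub>m (2*n+2)) = nickel_rep n \<sigma> (foldr (heis_mult n) (map pre ws) (\<lambda>_. 0))"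
      "foldr (heis_mult n) (map pre ws) (\<lambda>_. 0) \<in> heis_carrier n" using Cons by auto
    have "nickel_rep n \<sigma> (heis_mult n (pre w) (foldr (heis_mult n) (map pre ws) (\<lambda>_. 0)))
        = nickel_rep n \<sigma> (pre w) * nickel_rep n \<sigma> (foldr (heis_mult n) (map pre ws) (\<lambda>_. 0))"
      using rho.hom_mult[of "pre w" "foldr (heis_mult n) (map pre ws) (\<lambda>_. 0)"] pre1[OF w] IH(2) by simp
    thus ?case using IH pre2[OF w] heis_closed by simp
  qed
  show ?thesis
  proof (intro exI[of _ M] conjI M0 allI impI)
    fix ws c
    assume ws: "set ws \<subseteq> S \<union> (\<lambda>x. inv\<^bsub>KK\<lparr>carrier := HH\<rparr>\<^esub> x) ` S"
       and e: "foldr (*) ws (1\<^sub>m (2*n+2)) = el (2*n+2) (si (2*n)) (si (2*n+1)) (-c)"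
    have ws': "set ws \<subseteq> WS" using ws unfolding WS_def .
    let ?P = "foldr (heis_mult n) (map pre ws) (\<lambda>_. 0)"
    have "nickel_rep n \<sigma> ?P = nickel_rep n \<sigma> (ce (2*n+1) c)" using fold[OF ws'] e rho_z by simp
    hence P: "?P = ce (2*n+1) c" using rho_inj fold[OF ws'] ce_carrier[of "2*n+1" n c] by simp
    have "\<forall>g\<in>set (map pre ws). \<forall>i. \<bar>g i\<bar> \<le> M" using bnd ws' by auto
    from prod_bound[OF this M0, of n] have "\<bar>?P (2*n+1)\<bar> \<le> int (length ws) * M + int n * M^2 * int (length ws)^2" by simp
    thus "c \<le> int (length ws) * M + int n * M^2 * int (length ws)^2" using P by (simp add: ce_def)
  qed
qed

end

context heisctx begin

lemma distortion:
  assumes S: "finite S" "S \<subseteq> HH" "generate KK S = HH"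
      and T: "finite T" "T \<subseteq> carrier KK" "generate KK T = carrier KK"
  shows "\<not> (\<exists>C::real. \<forall>m. real (distortion_fn KK HH S T m) \<le> C * real m)"
proof
  assume "\<exists>C::real. \<forall>m. real (distortion_fn KK HH S T m) \<le> C * real m"
  then obtain C :: real where C: "\<And>m. real (distortion_fn KK HH S T m) \<le> C * real m" by blast
  interpret K: group KK by (rule UT_group_group)
  interpret KH: group "KK\<lparr>carrier := HH\<rparr>" by (rule subgroup.subgroup_is_group[OF subHH K.is_group])
  define p where "p = si (2*n)"
  define q where "q = si (2*n+1)"
  obtain r s where rs: "p < r" "r < s" "s < q" using positions unfolding p_def q_def by blast
  have qN: "q < 2*n+2" unfolding q_def by (rule sinv_lt) simp
  define WT where "WT = T \<union> (\<lambda>x. inv\<^bsub>KK\<^esub> x) ` T"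
  have WTc: "WT \<subseteq> UT (2*n+2)" unfolding WT_def using T(2) K.inv_closed by auto
  have WTf: "finite WT" unfolding WT_def using T(1) by simp
  have fa: "foldr (*) (w1 @ w2) (1\<^sub>m (2*n+2)) = foldr (*) w1 (1\<^sub>m (2*n+2)) * foldr (*) w2 (1\<^sub>m (2*n+2))"
    if "set w1 \<subseteq> WT" "set w2 \<subseteq> WT" for w1 w2
  proof -
    have "foldr (\<otimes>\<^bsub>KK\<^esub>) (w1 @ w2) \<one>\<^bsub>KK\<^esub> = foldr (\<otimes>\<^bsub>KK\<^esub>) w1 \<one>\<^bsub>KK\<^esub> \<otimes>\<^bsub>KK\<^esub> foldr (\<otimes>\<^bsub>KK\<^esub>) w2 \<one>\<^bsub>KK\<^esub>"
      by (rule K.foldr_append) (use that WTc in auto)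
    thus ?thesis by simp
  qed
  define iv where "iv w = rev (map (\<lambda>x. inv\<^bsub>KK\<^esub> x) w)" for w
  have ivset: "set (iv w) \<subseteq> WT" if "set w \<subseteq> WT" for w
    using K.inv_word_set[OF T(2), of w] that unfolding iv_def WT_def by simp
  have ivel: "foldr (*) (iv w) (1\<^sub>m (2*n+2)) = el (2*n+2) i j (-c)"
    if "i < j" "j < 2*n+2" "set w \<subseteq> WT" "foldr (*) w (1\<^sub>m (2*n+2)) = el (2*n+2) i j c" for w i j c
    unfolding iv_def using inv_word[OF that(1,2) _ that(4)] that(3) WTc by blast
  have getw: "\<exists>w. set w \<subseteq> WT \<and> foldr (*) w (1\<^sub>m (2*n+2)) = el (2*n+2) i j 1" if "i < j" "j < 2*n+2" for i j
  proof -
    have "el (2*n+2) i j 1 \<in> generate KK T" using T(3) el_UT[OF that] by simp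
    from K.gen_word[OF T(2) this] show ?thesis unfolding WT_def by simp
  qed
  have o1: "p < r" "r < 2*n+2" "r < s" "s < 2*n+2" "s < q" "p < s" using rs qN by auto
  obtain wu where wu: "set wu \<subseteq> WT" "foldr (*) wu (1\<^sub>m (2*n+2)) = el (2*n+2) p r 1" using getw[OF o1(1,2)] by blast
  obtain wv where wv: "set wv \<subseteq> WT" "foldr (*) wv (1\<^sub>m (2*n+2)) = el (2*n+2) r s 1" using getw[OF o1(3,4)] by blast
  obtain ww where ww: "set ww \<subseteq> WT" "foldr (*) ww (1\<^sub>m (2*n+2)) = el (2*n+2) s q 1" using getw[OF o1(5) qN] by blast
  define D where "D = 4 * length wu + 4 * length wv + 2 * length ww"
  define h where "h a = el (2*n+2) p q (- (int a * int a * int a))" for a :: nat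
  have upper: "word_length KK T (h a) \<le> a * D" for a
  proof -
    define X where "X = concat (replicate a wu)"
    define Y where "Y = concat (replicate a wv)"
    define Z where "Z = concat (replicate a ww)"
    have sX: "set X \<subseteq> WT" "set Y \<subseteq> WT" "set Z \<subseteq> WT" unfolding X_def Y_def Z_def using wu wv ww by (cases a; auto)+
    have pX: "foldr (*) X (1\<^sub>m (2*n+2)) = el (2*n+2) p r (int a)" unfolding X_def using pow_word[OF o1(1,2)] wu WTc by auto
    have pY: "foldr (*) Y (1\<^sub>m (2*n+2)) = el (2*n+2) r s (int a)" unfolding Y_def using pow_word[OF o1(3,4)] wv WTc by auto
    have pZ: "foldr (*) Z (1\<^sub>m (2*n+2)) = el (2*n+2) s q (int a)" unfolding Z_def using pow_word[OF o1(5) qN] ww WTc by auto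
    define cw1 where "cw1 = iv X @ iv Y @ X @ Y"
    have s1: "set cw1 \<subseteq> WT" unfolding cw1_def using sX ivset by auto
    have p1: "foldr (*) cw1 (1\<^sub>m (2*n+2)) = el (2*n+2) p s (int a * int a)"
    proof -
      have "foldr (*) cw1 (1\<^sub>m (2*n+2)) = el (2*n+2) p r (- int a) * (el (2*n+2) r s (- int a) * (el (2*n+2) p r (int a) * el (2*n+2) r s (int a)))"
      proof -
        have e3: "foldr (*) (X @ Y) (1\<^sub>m (2*n+2)) = foldr (*) X (1\<^sub>m (2*n+2)) * foldr (*) Y (1\<^sub>m (2*n+2))"
          by (rule fa) (use sX in auto)
        have e2: "foldr (*) (iv Y @ X @ Y) (1\<^sub>m (2*n+2)) = foldr (*) (iv Y) (1\<^sub>m (2*n+2)) * foldr (*) (X @ Y) (1\<^sub>m (2*n+2))"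
          by (rule fa) (use sX ivset in auto)
        have e1: "foldr (*) cw1 (1\<^sub>m (2*n+2)) = foldr (*) (iv X) (1\<^sub>m (2*n+2)) * foldr (*) (iv Y @ X @ Y) (1\<^sub>m (2*n+2))"
          unfolding cw1_def by (rule fa) (use sX ivset in auto)
        show ?thesis unfolding e1 e2 e3 ivel[OF o1(1,2) sX(1) pX] ivel[OF o1(3,4) sX(2) pY] pX pY ..
      qed
      also have "\<dots> = el (2*n+2) p s (int a * int a)" by (rule el_comm) (use o1 in auto)
      finally show ?thesis .
    qed
    define cw2 where "cw2 = iv cw1 @ Z @ cw1 @ iv Z"
    have s2: "set cw2 \<subseteq> WT" unfolding cw2_def using sX s1 ivset by auto
    have p2: "foldr (*) cw2 (1\<^sub>m (2*n+2)) = h a"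
    proof -
      have "foldr (*) cw2 (1\<^sub>m (2*n+2)) = el (2*n+2) p s (- (int a * int a)) * (el (2*n+2) s q (- (- int a)) * (el (2*n+2) p s (int a * int a) * el (2*n+2) s q (- int a)))"
      proof -
        have e3: "foldr (*) (cw1 @ iv Z) (1\<^sub>m (2*n+2)) = foldr (*) cw1 (1\<^sub>m (2*n+2)) * foldr (*) (iv Z) (1\<^sub>m (2*n+2))"
          by (rule fa) (use sX s1 ivset in auto)
        have e2: "foldr (*) (Z @ cw1 @ iv Z) (1\<^sub>m (2*n+2)) = foldr (*) Z (1\<^sub>m (2*n+2)) * foldr (*) (cw1 @ iv Z) (1\<^sub>m (2*n+2))"
          by (rule fa) (use sX s1 ivset in auto)
        have e1: "foldr (*) cw2 (1\<^sub>m (2*n+2)) = foldr (*) (iv cw1) (1\<^sub>m (2*n+2)) * foldr (*) (Z @ cw1 @ iv Z) (1\<^sub>m (2*n+2))"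
          unfolding cw2_def by (rule fa) (use sX s1 ivset in auto)
        show ?thesis unfolding e1 e2 e3 ivel[OF o1(6,4) s1 p1] ivel[OF o1(5) qN sX(3) pZ] p1 pZ by simp
      qed
      also have "\<dots> = el (2*n+2) p q ((int a * int a) * (- int a))" by (rule el_comm) (use o1 qN in auto)
      finally show ?thesis unfolding h_def by (simp add: algebra_simps)
    qed
    have "length cw2 = a * D" unfolding cw2_def cw1_def iv_def X_def Y_def Z_def D_def
      by (simp add: length_concat sum_list_replicate algebra_simps)
    moreover have "word_length KK T (h a) \<le> length cw2"
      using K.wl_le[of cw2 T "h a"] s2 p2 unfolding WT_def by simp
    ultimately show ?thesis by simp
  qed
  obtain M where M0: "M \<ge> 0" and M: "\<forall>ws c. set ws \<subseteq> S \<union> (\<lambda>x. inv\<^bsub>KK\<lparr>carrier := HH\<rparr>\<^esub> x) ` S \<longrightarrow>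
           foldr (*) ws (1\<^sub>m (2*n+2)) = el (2*n+2) p q (-c) \<longrightarrow>
           c \<le> int (length ws) * M + int n * M^2 * int (length ws)^2"
    using lower[OF S(1,2)] unfolding p_def q_def by blast
  have Hgen: "generate (KK\<lparr>carrier := HH\<rparr>) S = HH" using K.generate_consistent[OF S(2) subHH] S(3) by simp
  have hH: "h a \<in> HH" for a
    using rho_z[of "int a * int a * int a"] ce_carrier[of "2*n+1" n] unfolding h_def p_def q_def by (metis image_eqI le_add2 le_add1 le_refl Suc_eq_plus1 le_SucI one_le_numeral)
  define kk where "kk a = word_length (KK\<lparr>carrier := HH\<rparr>) S (h a)" for a
  have kbound: "int a * int a * int a \<le> int (kk a) * M + int n * M^2 * int (kk a)^2" for a
  proof -
    have cH: "carrier (KK\<lparr>carrier := HH\<rparr>) = HH" by simp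
    have S': "S \<subseteq> carrier (KK\<lparr>carrier := HH\<rparr>)" unfolding cH by (rule S(2))
    have "h a \<in> generate (KK\<lparr>carrier := HH\<rparr>) S" unfolding Hgen by (rule hH)
    from KH.wl_ex[OF S' this] obtain ws where ws: "length ws = kk a" "set ws \<subseteq> S \<union> (\<lambda>x. inv\<^bsub>KK\<lparr>carrier := HH\<rparr>\<^esub> x) ` S"
      "foldr (\<otimes>\<^bsub>KK\<lparr>carrier := HH\<rparr>\<^esub>) ws \<one>\<^bsub>KK\<lparr>carrier := HH\<rparr>\<^esub> = h a" unfolding kk_def by blast
    have "foldr (*) ws (1\<^sub>m (2*n+2)) = el (2*n+2) p q (- (int a * int a * int a))" using ws(3) unfolding h_def by simp
    from M[rule_format, OF ws(2) this] show ?thesis unfolding ws(1) .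
  qed
  have fin: "finite {word_length (KK\<lparr>carrier := HH\<rparr>) S h' | h'. h' \<in> HH \<and> word_length KK T h' \<le> m}" for m
  proof -
    have sub: "{h'. h' \<in> HH \<and> word_length KK T h' \<le> m} \<subseteq> (\<lambda>ws. foldr (*) ws (1\<^sub>m (2*n+2))) ` {ws. set ws \<subseteq> WT \<and> length ws \<le> m}"
    proof
      fix h' assume h': "h' \<in> {h'. h' \<in> HH \<and> word_length KK T h' \<le> m}"
      hence h'H: "h' \<in> HH" and h'm: "word_length KK T h' \<le> m" by auto
      have "h' \<in> carrier KK" using subgroup.subset[OF subHH] h'H by blast
      hence "h' \<in> generate KK T" by (simp only: T(3))
      from K.wl_ex[OF T(2) this] obtain ws where ws: "length ws = word_length KK T h'"
        "set ws \<subseteq> T \<union> (\<lambda>x. inv\<^bsub>KK\<^esub> x) ` T" "foldr (\<otimes>\<^bsub>KK\<^esub>) ws \<one>\<^bsub>KK\<^esub> = h'" by blast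
      have e: "h' = foldr (*) ws (1\<^sub>m (2*n+2))" using ws(3) by simp
      have w: "ws \<in> {ws. set ws \<subseteq> WT \<and> length ws \<le> m}" using ws(1,2) h'm unfolding WT_def by simp
      show "h' \<in> (\<lambda>ws. foldr (*) ws (1\<^sub>m (2*n+2))) ` {ws. set ws \<subseteq> WT \<and> length ws \<le> m}"
        using e w by (rule image_eqI)
    qed
    have "finite ((\<lambda>ws. foldr (*) ws (1\<^sub>m (2*n+2))) ` {ws. set ws \<subseteq> WT \<and> length ws \<le> m})"
      using finite_lists_length_le[OF WTf, of m] by (rule finite_imageI)
    hence f1: "finite {h'. h' \<in> HH \<and> word_length KK T h' \<le> m}" using sub by (rule finite_subset[rotated])
    have eq: "{word_length (KK\<lparr>carrier := HH\<rparr>) S h' | h'. h' \<in> HH \<and> word_length KK T h' \<le> m}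
        = (\<lambda>h'. word_length (KK\<lparr>carrier := HH\<rparr>) S h') ` {h'. h' \<in> HH \<and> word_length KK T h' \<le> m}" by blast
    show ?thesis unfolding eq using f1 by (rule finite_imageI)
  qed
  have dbound: "kk a \<le> distortion_fn KK HH S T (a * D)" for a
    unfolding distortion_fn_def kk_def using upper[of a] hH[of a] fin[of "a*D"] by (intro Max_ge) auto
  define F where "F = (C * real D) * real_of_int M + real n * (real_of_int M)^2 * (C * real D)^2"
  define a where "a = nat \<lceil>F\<rceil> + 1"
  have a1: "real a \<ge> 1" unfolding a_def by simp
  have "real (kk a) \<le> C * real (a * D)" using dbound[of a] C[of "a*D"] by linarith
  hence k: "real (kk a) \<le> (C * real D) * real a" by (simp add: algebra_simps)
  have "real_of_int (int a * int a * int a) \<le> real_of_int (int (kk a) * M + int n * M^2 * int (kk a)^2)"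
    using kbound[of a] by (simp only: of_int_le_iff)
  hence c: "(real a)^3 \<le> real (kk a) * real_of_int M + real n * (real_of_int M)^2 * (real (kk a))^2"
    by (simp add: power3_eq_cube)
  have "real a \<le> F" unfolding F_def
    by (rule arith_contra[OF a1 _ k c]) (use M0 in auto)
  moreover have "real a > F" unfolding a_def by linarith
  ultimately show False by simp
qed

end

theorem theorem4p6:
  fixes n :: nat and \<sigma> :: "nat \<Rightarrow> nat"
  assumes "n \<ge> 2"
    and "bij_betw \<sigma> {..<2*n+2} {..<2*n+2}"
    and "\<forall>g \<in> carrier (heis n). nickel_rep n \<sigma> g \<in> UT (2*n+2)"
  shows "distorted_subgroup (UT_group (2*n+2)) (nickel_rep n \<sigma> ` carrier (heis n))"
proof -
  interpret heisctx n \<sigma> using assms by (rule heisctx.intro)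
  interpret K: group "UT_group (2*n+2)" by (rule UT_group_group)
  interpret rho: group_hom "heis n" "UT_group (2*n+2)" "nickel_rep n \<sigma>" by (rule rho_group_hom)
  have gen: "generate (UT_group (2*n+2)) (nickel_rep n \<sigma> ` Egen n) = nickel_rep n \<sigma> ` carrier (heis n)"
    using rho.generate_img[of "Egen n"] Egen_sub heis_generated by simp
  show ?thesis unfolding distorted_subgroup_def
  proof (intro conjI)
    show "group (UT_group (2*n+2))" by (rule UT_group_group)
    show "subgroup (nickel_rep n \<sigma> ` carrier (heis n)) (UT_group (2*n+2))" using subHH by simp
    show "\<exists>T. finite T \<and> T \<subseteq> carrier (UT_group (2*n+2)) \<and> generate (UT_group (2*n+2)) T = carrier (UT_group (2*n+2))"
      using Tgen_finite Tgen_sub UT_generated by (intro exI[of _ "Tgen (2*n+2)"]) auto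
    show "\<exists>S. finite S \<and> S \<subseteq> nickel_rep n \<sigma> ` carrier (heis n) \<and> generate (UT_group (2*n+2)) S = nickel_rep n \<sigma> ` carrier (heis n)"
    proof (intro exI[of _ "nickel_rep n \<sigma> ` Egen n"] conjI)
      show "finite (nickel_rep n \<sigma> ` Egen n)" using Egen_finite by simp
      show "nickel_rep n \<sigma> ` Egen n \<subseteq> nickel_rep n \<sigma> ` carrier (heis n)" using image_mono[OF Egen_sub] by simp
    qed (rule gen)
    show "\<forall>S T. finite S \<and> S \<subseteq> nickel_rep n \<sigma> ` carrier (heis n) \<and> generate (UT_group (2*n+2)) S = nickel_rep n \<sigma> ` carrier (heis n) \<and>
            finite T \<and> T \<subseteq> carrier (UT_group (2*n+2)) \<and> generate (UT_group (2*n+2)) T = carrier (UT_group (2*n+2)) \<longrightarrow>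
            \<not> (\<exists>C::real. \<forall>m. real (distortion_fn (UT_group (2*n+2)) (nickel_rep n \<sigma> ` carrier (heis n)) S T m) \<le> C * real m)"
      using distortion by simp
  qed
qed

end
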